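(* Let $X$ be an FK-space containing $\phi$ such that $D_p^qB\supseteq\overline{\phi}$ (closure of $\phi$ in $X$). Then $\overline{\phi}$ has $\sigma_p^q[K]$, i.e. $\overline{\phi}\subseteq D_p^qS$, and $D_p^qS=D_p^qW=\overline{\phi}$.
   Context: An FK-space is a vector subspace of the space $w$ of all complex sequences with a complete metrizable locally convex topology in which coordinate functionals are continuous; $X'$ is its continuous dual. $\delta^j$ has $1$ in position $j$, $0$ elsewhere; $\phi=\operatorname{span}\{\delta^j\}$. $p(n)<q(n)$ are nonnegative integer sequences with $q(n)\to\infty$. For $x\in w$, $x^{(k)}=\sum_{j=1}^kx_j\delta^j$ and $T_n(x)=\frac{1}{q(n)-p(n)}\sum_{k=p(n)+1}^{q(n)}x^{(k)}$. Subspaces of $X$: $D_p^qS=\{x\in X: T_n(x)\to x\text{ in }X\}$; $D_p^qW=\{x\in X: f(T_n(x))\to f(x)\ \forall f\in X'\}$; $D_p^qB=\{x\in X:\sup_n|f(T_n(x))|<\infty\ \forall f\in X'\}$. A subset $Y\subseteq X$ has $\sigma_p^q[K]$ if $T_n(x)\to x$ in $X$ for every $x\in Y$. *)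

theory Defs
  imports "HOL-Analysis.Analysis"
begin

text \<open>Sequences are indexed from 0: the space w is nat => complex.
  An FK-space is given by a complex linear subspace X of w together with a countable
  family of seminorms P k on X (a Frechet, i.e. complete metrizable locally convex,
  topology) in which all coordinate functionals are continuous.\<close>

definition fk_topology :: "(nat \<Rightarrow> complex) set \<Rightarrow> (nat \<Rightarrow> (nat \<Rightarrow> complex) \<Rightarrow> real)
    \<Rightarrow> (nat \<Rightarrow> complex) topology" where
  "fk_topology X P = topology (\<lambda>U. U \<subseteq> X \<and> (\<forall>x\<in>U. \<exists>k \<epsilon>. \<epsilon> > 0 \<and>
      {y\<in>X. (\<Sum>i\<le>k. P i (\<lambda>j. y j - x j)) < \<epsilon>} \<subseteq> U))"

definition FK_space :: "(nat \<Rightarrow> complex) set \<Rightarrow> (nat \<Rightarrow> (nat \<Rightarrow> complex) \<Rightarrow> real) \<Rightarrow> bool" where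
  "FK_space X P \<longleftrightarrow>
     \<comment> \<open>X is a complex linear subspace of w\<close>
     (\<lambda>j. 0) \<in> X \<and> (\<forall>x\<in>X. \<forall>y\<in>X. (\<lambda>j. x j + y j) \<in> X) \<and> (\<forall>c. \<forall>x\<in>X. (\<lambda>j. c * x j) \<in> X) \<and>
     \<comment> \<open>each P k is a seminorm on X\<close>
     (\<forall>k. \<forall>x\<in>X. P k x \<ge> 0) \<and>
     (\<forall>k. \<forall>x\<in>X. \<forall>y\<in>X. P k (\<lambda>j. x j + y j) \<le> P k x + P k y) \<and>
     (\<forall>k c. \<forall>x\<in>X. P k (\<lambda>j. c * x j) = cmod c * P k x) \<and>
     \<comment> \<open>the family separates points (Hausdorff, hence metrizable)\<close>
     (\<forall>x\<in>X. (\<forall>k. P k x = 0) \<longrightarrow> x = (\<lambda>j. 0)) \<and>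
     \<comment> \<open>completeness\<close>
     (\<forall>s. (\<forall>n. s n \<in> X) \<and> (\<forall>k. \<forall>\<epsilon>>0. \<exists>N. \<forall>m\<ge>N. \<forall>n\<ge>N. P k (\<lambda>j. s m j - s n j) < \<epsilon>)
          \<longrightarrow> (\<exists>x\<in>X. limitin (fk_topology X P) s x sequentially)) \<and>
     \<comment> \<open>coordinate functionals are continuous\<close>
     (\<forall>j. continuous_map (fk_topology X P) euclidean (\<lambda>x. x j))"

definition fk_dual :: "(nat \<Rightarrow> complex) set \<Rightarrow> (nat \<Rightarrow> (nat \<Rightarrow> complex) \<Rightarrow> real)
    \<Rightarrow> ((nat \<Rightarrow> complex) \<Rightarrow> complex) set" where
  "fk_dual X P = {f. (\<forall>x\<in>X. \<forall>y\<in>X. f (\<lambda>j. x j + y j) = f x + f y) \<and>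
                     (\<forall>c. \<forall>x\<in>X. f (\<lambda>j. c * x j) = c * f x) \<and>
                     continuous_map (fk_topology X P) euclidean f}"

text \<open>phi = span of the unit sequences = finitely supported sequences.\<close>
definition phi :: "(nat \<Rightarrow> complex) set" where
  "phi = {x. finite {j. x j \<noteq> 0}}"

text \<open>Section x^(k): the first k coordinates (0-based: indices j < k).\<close>
definition section_seq :: "(nat \<Rightarrow> complex) \<Rightarrow> nat \<Rightarrow> (nat \<Rightarrow> complex)" where
  "section_seq x k = (\<lambda>j. if j < k then x j else 0)"

definition Tmean :: "(nat \<Rightarrow> nat) \<Rightarrow> (nat \<Rightarrow> nat) \<Rightarrow> nat \<Rightarrow> (nat \<Rightarrow> complex) \<Rightarrow> (nat \<Rightarrow> complex)" where
  "Tmean p q n x = (\<lambda>j. (\<Sum>k\<in>{p n<..q n}. section_seq x k j) / of_nat (q n - p n))"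

definition DS :: "(nat \<Rightarrow> complex) set \<Rightarrow> (nat \<Rightarrow> (nat \<Rightarrow> complex) \<Rightarrow> real)
    \<Rightarrow> (nat \<Rightarrow> nat) \<Rightarrow> (nat \<Rightarrow> nat) \<Rightarrow> (nat \<Rightarrow> complex) set" where
  "DS X P p q = {x\<in>X. limitin (fk_topology X P) (\<lambda>n. Tmean p q n x) x sequentially}"

definition DW :: "(nat \<Rightarrow> complex) set \<Rightarrow> (nat \<Rightarrow> (nat \<Rightarrow> complex) \<Rightarrow> real)
    \<Rightarrow> (nat \<Rightarrow> nat) \<Rightarrow> (nat \<Rightarrow> nat) \<Rightarrow> (nat \<Rightarrow> complex) set" where
  "DW X P p q = {x\<in>X. \<forall>f\<in>fk_dual X P. (\<lambda>n. f (Tmean p q n x)) \<longlonglongrightarrow> f x}"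

definition DB :: "(nat \<Rightarrow> complex) set \<Rightarrow> (nat \<Rightarrow> (nat \<Rightarrow> complex) \<Rightarrow> real)
    \<Rightarrow> (nat \<Rightarrow> nat) \<Rightarrow> (nat \<Rightarrow> nat) \<Rightarrow> (nat \<Rightarrow> complex) set" where
  "DB X P p q = {x\<in>X. \<forall>f\<in>fk_dual X P. bounded (range (\<lambda>n. f (Tmean p q n x)))}"

definition has_sigma :: "(nat \<Rightarrow> complex) set \<Rightarrow> (nat \<Rightarrow> (nat \<Rightarrow> complex) \<Rightarrow> real)
    \<Rightarrow> (nat \<Rightarrow> nat) \<Rightarrow> (nat \<Rightarrow> nat) \<Rightarrow> (nat \<Rightarrow> complex) set \<Rightarrow> bool" where
  "has_sigma X P p q Y \<longleftrightarrow> (\<forall>x\<in>Y. limitin (fk_topology X P) (\<lambda>n. Tmean p q n x) x sequentially)"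

end

theory Submission
  imports Defs
begin

definition vadd :: "(nat \<Rightarrow> complex) \<Rightarrow> (nat \<Rightarrow> complex) \<Rightarrow> (nat \<Rightarrow> complex)" where
  "vadd x y = (\<lambda>j. x j + y j)"
definition vsub :: "(nat \<Rightarrow> complex) \<Rightarrow> (nat \<Rightarrow> complex) \<Rightarrow> (nat \<Rightarrow> complex)" where
  "vsub x y = (\<lambda>j. x j - y j)"
definition vsc :: "complex \<Rightarrow> (nat \<Rightarrow> complex) \<Rightarrow> (nat \<Rightarrow> complex)" where
  "vsc c x = (\<lambda>j. c * x j)"

lemma vsub_as: "vsub x y = vadd x (vsc (-1) y)"
  by (simp add: vsub_def vadd_def vsc_def)

locale fk =
  fixes X :: "(nat \<Rightarrow> complex) set" and P :: "nat \<Rightarrow> (nat \<Rightarrow> complex) \<Rightarrow> real"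
  assumes FK: "FK_space X P"
begin

definition Q :: "nat \<Rightarrow> (nat \<Rightarrow> complex) \<Rightarrow> real" where
  "Q k x = (\<Sum>i\<le>k. P i x)"

abbreviation "T \<equiv> fk_topology X P"

lemma zeroX: "(\<lambda>j. 0) \<in> X" using FK by (simp add: FK_space_def)
lemma addX: "x \<in> X \<Longrightarrow> y \<in> X \<Longrightarrow> vadd x y \<in> X" using FK by (simp add: FK_space_def vadd_def)
lemma scX: "x \<in> X \<Longrightarrow> vsc c x \<in> X" using FK by (simp add: FK_space_def vsc_def)
lemma subX: "x \<in> X \<Longrightarrow> y \<in> X \<Longrightarrow> vsub x y \<in> X" by (simp add: vsub_as addX scX)

lemma P_nonneg: "x \<in> X \<Longrightarrow> P k x \<ge> 0" using FK by (simp add: FK_space_def)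
lemma P_add: "x \<in> X \<Longrightarrow> y \<in> X \<Longrightarrow> P k (vadd x y) \<le> P k x + P k y"
  using FK by (simp add: FK_space_def vadd_def)
lemma P_sc: "x \<in> X \<Longrightarrow> P k (vsc c x) = cmod c * P k x"
  using FK by (simp add: FK_space_def vsc_def)

lemma Q_nonneg: "x \<in> X \<Longrightarrow> Q k x \<ge> 0" unfolding Q_def by (simp add: P_nonneg sum_nonneg)
lemma Q_add: "x \<in> X \<Longrightarrow> y \<in> X \<Longrightarrow> Q k (vadd x y) \<le> Q k x + Q k y"
  unfolding Q_def sum.distrib[symmetric] by (rule sum_mono) (simp add: P_add)
lemma Q_sc: "x \<in> X \<Longrightarrow> Q k (vsc c x) = cmod c * Q k x"
  unfolding Q_def by (simp add: P_sc sum_distrib_left)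
lemma Q_mono: "x \<in> X \<Longrightarrow> k \<le> k' \<Longrightarrow> Q k x \<le> Q k' x"
  unfolding Q_def by (rule sum_mono2) (auto simp: P_nonneg)
lemma P_le_Q: "x \<in> X \<Longrightarrow> i \<le> k \<Longrightarrow> P i x \<le> Q k x"
  unfolding Q_def using member_le_sum[of i "{..k}" "\<lambda>i. P i x"] by (simp add: P_nonneg)

lemma Q_zero: "Q k (\<lambda>j. 0) = 0"
proof -
  have "vsc 0 (\<lambda>j. 0) = (\<lambda>j. 0)" by (simp add: vsc_def)
  then show ?thesis using Q_sc[OF zeroX, of k 0] by simp
qed

lemma Q_sub_sym: "x \<in> X \<Longrightarrow> y \<in> X \<Longrightarrow> Q k (vsub x y) = Q k (vsub y x)"
proof -
  assume x: "x \<in> X" and y: "y \<in> X"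
  have "vsub x y = vsc (-1) (vsub y x)" by (simp add: vsub_def vsc_def)
  then show ?thesis using Q_sc[OF subX[OF y x], of k "-1"] by simp
qed

lemma Q_tri: "x \<in> X \<Longrightarrow> y \<in> X \<Longrightarrow> z \<in> X \<Longrightarrow> Q k (vsub x z) \<le> Q k (vsub x y) + Q k (vsub y z)"
proof -
  assume x: "x \<in> X" and y: "y \<in> X" and z: "z \<in> X"
  have "vsub x z = vadd (vsub x y) (vsub y z)" by (simp add: vsub_def vadd_def)
  then show ?thesis using Q_add[OF subX[OF x y] subX[OF y z]] by simp
qed

lemma Q_sub: "x \<in> X \<Longrightarrow> y \<in> X \<Longrightarrow> Q k (vsub x y) \<le> Q k x + Q k y"
  using Q_tri[OF _ zeroX, of x y k] Q_sub_sym[OF zeroX, of y k]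
  by (simp add: vsub_def)

lemma Q_rev_tri: "x \<in> X \<Longrightarrow> y \<in> X \<Longrightarrow> \<bar>Q k x - Q k y\<bar> \<le> Q k (vsub x y)"
proof -
  assume x: "x \<in> X" and y: "y \<in> X"
  have "x = vadd (vsub x y) y" "y = vadd (vsub y x) x" by (auto simp: vsub_def vadd_def)
  then have "Q k x \<le> Q k (vsub x y) + Q k y" "Q k y \<le> Q k (vsub y x) + Q k x"
    using Q_add[OF subX[OF x y] y, of k] Q_add[OF subX[OF y x] x, of k] by simp_all
  then show ?thesis using Q_sub_sym[OF x y] by simp
qed

definition opn :: "(nat \<Rightarrow> complex) set \<Rightarrow> bool" where
  "opn U \<longleftrightarrow> U \<subseteq> X \<and> (\<forall>x\<in>U. \<exists>k \<epsilon>. \<epsilon> > 0 \<and> {y\<in>X. Q k (vsub y x) < \<epsilon>} \<subseteq> U)"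

lemma istop: "istopology opn"
  unfolding istopology_def
proof (intro conjI allI impI)
  fix S U assume S: "opn S" and U: "opn U"
  show "opn (S \<inter> U)" unfolding opn_def
  proof (intro conjI ballI)
    show "S \<inter> U \<subseteq> X" using S by (auto simp: opn_def)
    fix x assume x: "x \<in> S \<inter> U"
    obtain k1 e1 where 1: "e1 > 0" "{y\<in>X. Q k1 (vsub y x) < e1} \<subseteq> S" using S x by (auto simp: opn_def)
    obtain k2 e2 where 2: "e2 > 0" "{y\<in>X. Q k2 (vsub y x) < e2} \<subseteq> U" using U x by (auto simp: opn_def)
    have xX: "x \<in> X" using x S by (auto simp: opn_def)
    have "{y\<in>X. Q (max k1 k2) (vsub y x) < min e1 e2} \<subseteq> S \<inter> U"
    proof
      fix y assume y: "y \<in> {y\<in>X. Q (max k1 k2) (vsub y x) < min e1 e2}"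
      then have yX: "y \<in> X" by simp
      have "Q k1 (vsub y x) \<le> Q (max k1 k2) (vsub y x)" "Q k2 (vsub y x) \<le> Q (max k1 k2) (vsub y x)"
        by (auto intro!: Q_mono subX yX xX)
      then show "y \<in> S \<inter> U" using y 1 2 by auto
    qed
    then show "\<exists>k \<epsilon>. \<epsilon> > 0 \<and> {y\<in>X. Q k (vsub y x) < \<epsilon>} \<subseteq> S \<inter> U" using 1 2
      by (intro exI[of _ "max k1 k2"] exI[of _ "min e1 e2"]) auto
  qed
next
  fix K assume K: "\<forall>S\<in>K. opn S"
  show "opn (\<Union>K)" unfolding opn_def
  proof (intro conjI ballI)
    show "\<Union>K \<subseteq> X" using K by (auto simp: opn_def)
    fix x assume "x \<in> \<Union>K"
    then obtain S where "S \<in> K" "x \<in> S" by auto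
    have "opn S" using K \<open>S \<in> K\<close> by blast
    then obtain k e where "e > 0" "{y\<in>X. Q k (vsub y x) < e} \<subseteq> S" using \<open>x \<in> S\<close> unfolding opn_def by blast
    then show "\<exists>k \<epsilon>. \<epsilon> > 0 \<and> {y\<in>X. Q k (vsub y x) < \<epsilon>} \<subseteq> \<Union>K" using \<open>S \<in> K\<close> by blast
  qed
qed

lemma T_eq: "T = topology opn"
  unfolding fk_topology_def opn_def Q_def vsub_def by simp

lemma openin_T: "openin T U \<longleftrightarrow> opn U"
  by (simp add: T_eq istop)

lemma ball_open: "x \<in> X \<Longrightarrow> openin T {y\<in>X. Q k (vsub y x) < e}"
  unfolding openin_T opn_def
proof (intro conjI ballI)
  fix z assume x: "x \<in> X" and z: "z \<in> {y\<in>X. Q k (vsub y x) < e}"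
  have zX: "z \<in> X" using z by simp
  show "\<exists>k' \<epsilon>. \<epsilon> > 0 \<and> {y\<in>X. Q k' (vsub y z) < \<epsilon>} \<subseteq> {y\<in>X. Q k (vsub y x) < e}"
  proof (intro exI conjI)
    show "e - Q k (vsub z x) > 0" using z by simp
    show "{y\<in>X. Q k (vsub y z) < e - Q k (vsub z x)} \<subseteq> {y\<in>X. Q k (vsub y x) < e}"
    proof safe
      fix y assume y: "y \<in> X" "Q k (vsub y z) < e - Q k (vsub z x)"
      show "Q k (vsub y x) < e" using Q_tri[OF y(1) zX x, of k] y(2) by linarith
    qed
  qed
qed auto

lemma topspace_T: "topspace T = X"
proof -
  have "openin T X" unfolding openin_T opn_def
    by (auto intro!: exI[of _ "1::real"])
  then have "X \<subseteq> topspace T" by (rule openin_subset)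
  moreover have "topspace T \<subseteq> X"
    unfolding topspace_def openin_T opn_def by auto
  ultimately show ?thesis by auto
qed

lemma limitin_iff:
  assumes s: "\<And>n. s n \<in> X"
  shows "limitin T s x sequentially \<longleftrightarrow>
     x \<in> X \<and> (\<forall>k e. e > 0 \<longrightarrow> eventually (\<lambda>n. Q k (vsub (s n) x) < e) sequentially)"
proof
  assume L: "limitin T s x sequentially"
  then have x: "x \<in> X" by (simp add: limitin_def topspace_T)
  show "x \<in> X \<and> (\<forall>k e. e > 0 \<longrightarrow> eventually (\<lambda>n. Q k (vsub (s n) x) < e) sequentially)"
  proof (intro conjI allI impI x)
    fix k and e :: real assume e: "e > 0"
    have "eventually (\<lambda>n. s n \<in> {y\<in>X. Q k (vsub y x) < e}) sequentially"
      using L ball_open[OF x, of k e] x e unfolding limitin_def by (auto simp: vsub_def Q_zero)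
    then show "eventually (\<lambda>n. Q k (vsub (s n) x) < e) sequentially"
      by (rule eventually_mono) simp
  qed
next
  assume R: "x \<in> X \<and> (\<forall>k e. e > 0 \<longrightarrow> eventually (\<lambda>n. Q k (vsub (s n) x) < e) sequentially)"
  show "limitin T s x sequentially" unfolding limitin_def topspace_T
  proof (intro conjI allI impI)
    show "x \<in> X" using R by simp
    fix U assume U: "openin T U \<and> x \<in> U"
    then obtain k e where ke: "e > 0" "{y\<in>X. Q k (vsub y x) < e} \<subseteq> U"
      by (auto simp: openin_T opn_def)
    have "eventually (\<lambda>n. Q k (vsub (s n) x) < e) sequentially" using R ke(1) by simp
    then show "eventually (\<lambda>n. s n \<in> U) sequentially"
    proof (rule eventually_mono)
      fix n assume "Q k (vsub (s n) x) < e"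
      then have "s n \<in> {y\<in>X. Q k (vsub y x) < e}" using s by simp
      then show "s n \<in> U" by (rule subsetD[OF ke(2)])
    qed
  qed
qed

lemma closure_iff:
  assumes S: "S \<subseteq> X"
  shows "x \<in> T closure_of S \<longleftrightarrow> x \<in> X \<and> (\<forall>k e. e > 0 \<longrightarrow> (\<exists>y\<in>S. Q k (vsub y x) < e))"
proof
  assume L: "x \<in> T closure_of S"
  have L2: "x \<in> topspace T" "\<And>U. x \<in> U \<Longrightarrow> openin T U \<Longrightarrow> (\<exists>y. y \<in> S \<and> y \<in> U)"
    using L unfolding in_closure_of by blast+
  then have x: "x \<in> X" unfolding topspace_T by blast
  show "x \<in> X \<and> (\<forall>k e. e > 0 \<longrightarrow> (\<exists>y\<in>S. Q k (vsub y x) < e))"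
  proof (intro conjI allI impI x)
    fix k and e :: real assume e: "e > 0"
    have "x \<in> {y\<in>X. Q k (vsub y x) < e}" using x e by (simp add: vsub_def Q_zero)
    from L2(2)[OF this ball_open[OF x]] obtain y where "y \<in> S" "y \<in> {y\<in>X. Q k (vsub y x) < e}"
      by blast
    then show "\<exists>y\<in>S. Q k (vsub y x) < e" by auto
  qed
next
  assume R: "x \<in> X \<and> (\<forall>k e. e > 0 \<longrightarrow> (\<exists>y\<in>S. Q k (vsub y x) < e))"
  show "x \<in> T closure_of S" unfolding in_closure_of topspace_T
  proof (intro conjI allI impI)
    show "x \<in> X" using R by simp
    fix U assume U: "x \<in> U \<and> openin T U"
    then obtain k e where ke: "e > 0" "{y\<in>X. Q k (vsub y x) < e} \<subseteq> U"
      unfolding openin_T opn_def by blast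
    obtain y where y: "y \<in> S" "Q k (vsub y x) < e" using R ke(1) by blast
    then have "y \<in> {y\<in>X. Q k (vsub y x) < e}" using S by auto
    then show "\<exists>y. y \<in> S \<and> y \<in> U" using y(1) ke(2) by blast
  qed
qed

definition clin :: "((nat \<Rightarrow> complex) \<Rightarrow> complex) \<Rightarrow> bool" where
  "clin f \<longleftrightarrow> (\<forall>x\<in>X. \<forall>y\<in>X. f (vadd x y) = f x + f y) \<and> (\<forall>c. \<forall>x\<in>X. f (vsc c x) = c * f x)"

lemma clin_zero: "clin f \<Longrightarrow> f (\<lambda>j. 0) = 0"
proof -
  assume f: "clin f"
  have "vsc 0 (\<lambda>j. 0) = (\<lambda>j. 0)" by (simp add: vsc_def)
  moreover have "f (vsc 0 (\<lambda>j. 0)) = 0 * f (\<lambda>j. 0)" using f zeroX unfolding clin_def by blast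
  ultimately show ?thesis by simp
qed

lemma clin_sub: "clin f \<Longrightarrow> x \<in> X \<Longrightarrow> y \<in> X \<Longrightarrow> f (vsub x y) = f x - f y"
proof -
  assume f: "clin f" and x: "x \<in> X" and y: "y \<in> X"
  have "f (vadd x (vsc (-1) y)) = f x + f (vsc (-1) y)" using f x scX[OF y] unfolding clin_def by blast
  moreover have "f (vsc (-1) y) = (-1) * f y" using f y unfolding clin_def by blast
  ultimately show ?thesis unfolding vsub_as by simp
qed

lemma bounded_cont:
  assumes f: "clin f" and b: "\<And>x. x \<in> X \<Longrightarrow> cmod (f x) \<le> C * Q k x"
  shows "continuous_map T euclidean f"
  unfolding continuous_map topspace_T
proof (intro conjI allI impI)
  show "f ` X \<subseteq> topspace euclidean" by simp
  fix U :: "complex set" assume "openin euclidean U"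
  then have U: "open U" by simp
  show "openin T {x \<in> X. f x \<in> U}" unfolding openin_T opn_def
  proof (intro conjI ballI)
    fix x assume x: "x \<in> {x \<in> X. f x \<in> U}"
    then obtain e where e: "e > 0" "ball (f x) e \<subseteq> U" using U open_contains_ball by blast
    have "{y\<in>X. Q k (vsub y x) < e / (\<bar>C\<bar> + 1)} \<subseteq> {x \<in> X. f x \<in> U}"
    proof safe
      fix y assume y: "y \<in> X" "Q k (vsub y x) < e / (\<bar>C\<bar> + 1)"
      have xX: "x \<in> X" using x by simp
      have "cmod (f y - f x) = cmod (f (vsub y x))" using clin_sub[OF f y(1) xX] by simp
      also have "\<dots> \<le> C * Q k (vsub y x)" by (rule b[OF subX[OF y(1) xX]])
      also have "\<dots> \<le> \<bar>C\<bar> * Q k (vsub y x)"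
        using Q_nonneg[OF subX[OF y(1) xX]] by (simp add: mult_right_mono)
      also have "\<dots> \<le> \<bar>C\<bar> * (e / (\<bar>C\<bar> + 1))" using y(2) by (intro mult_left_mono) auto
      also have "\<dots> < e" using e(1) by (simp add: field_simps)
      finally have lt: "cmod (f y - f x) < e" .
      have "dist (f x) (f y) = cmod (f y - f x)" unfolding dist_norm by (rule norm_minus_commute)
      then have "f y \<in> ball (f x) e" using lt by simp
      then show "f y \<in> U" using e by auto
    qed
    then show "\<exists>k \<epsilon>. \<epsilon> > 0 \<and> {y\<in>X. Q k (vsub y x) < \<epsilon>} \<subseteq> {x \<in> X. f x \<in> U}"
      using e(1) by (intro exI[of _ k] exI[of _ "e / (\<bar>C\<bar> + 1)"]) auto
  qed auto
qed

lemma cont_bounded: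
  assumes f: "clin f" and c: "continuous_map T euclidean f"
  shows "\<exists>k C. C \<ge> 0 \<and> (\<forall>x\<in>X. cmod (f x) \<le> C * Q k x)"
proof -
  have c2: "openin euclidean U \<Longrightarrow> openin T {x \<in> topspace T. f x \<in> U}" for U
    using c unfolding continuous_map by blast
  have "openin T {x \<in> X. f x \<in> ball 0 1}"
    using c2[of "ball 0 1", folded open_openin, OF open_ball] unfolding topspace_T .
  moreover have "(\<lambda>j. 0) \<in> {x \<in> X. f x \<in> ball 0 1}" using clin_zero[OF f] zeroX by simp
  ultimately obtain k e where e: "e > 0" "{y\<in>X. Q k (vsub y (\<lambda>j. 0)) < e} \<subseteq> {x \<in> X. f x \<in> ball 0 1}"
    unfolding openin_T opn_def by blast
  have vs0: "vsub y (\<lambda>j. 0) = y" for y by (simp add: vsub_def)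
  have small: "y \<in> X \<Longrightarrow> Q k y < e \<Longrightarrow> cmod (f y) < 1" for y using e(2) vs0 by auto
  have "\<forall>x\<in>X. cmod (f x) \<le> (2 / e) * Q k x"
  proof
    fix x assume x: "x \<in> X"
    show "cmod (f x) \<le> (2 / e) * Q k x"
    proof (cases "Q k x = 0")
      case True
      have "cmod (f x) < 1 / t" if t: "t > 0" for t :: real
      proof -
        have "Q k (vsc (of_real t) x) = 0" using Q_sc[OF x, of k "of_real t"] True by simp
        then have "cmod (f (vsc (of_real t) x)) < 1" using small[OF scX[OF x]] e(1) by simp
        then have "t * cmod (f x) < 1" using f x t unfolding clin_def by (simp add: norm_mult)
        then show ?thesis using t by (simp add: field_simps)
      qed
      then have "cmod (f x) = 0"
      proof -
        assume h: "\<And>t. t > 0 \<Longrightarrow> cmod (f x) < 1 / t"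
        show ?thesis
        proof (rule ccontr)
          assume "cmod (f x) \<noteq> 0"
          then have pos: "cmod (f x) > 0" by simp
          have "cmod (f x) < 1 / (1 / cmod (f x))" using h[of "1 / cmod (f x)"] pos by simp
          then show False by simp
        qed
      qed
      then show ?thesis using True by simp
    next
      case False
      then have Qp: "Q k x > 0" using Q_nonneg[OF x, of k] by simp
      define t where "t = e / (2 * Q k x)"
      have tp: "t > 0" using Qp e by (simp add: t_def)
      have "Q k (vsc (of_real t) x) = t * Q k x" using Q_sc[OF x, of k "of_real t"] tp by simp
      also have "\<dots> = e / 2" using Qp by (simp add: t_def)
      finally have "cmod (f (vsc (of_real t) x)) < 1" using small[OF scX[OF x]] e(1) by simp
      then have "t * cmod (f x) < 1" using f x tp unfolding clin_def by (simp add: norm_mult)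
      then have "cmod (f x) < 1 / t" using tp by (simp add: field_simps)
      also have "1 / t = (2 / e) * Q k x" using Qp e by (simp add: t_def field_simps)
      finally show ?thesis by simp
    qed
  qed
  then show ?thesis using e(1) by (intro exI[of _ k] exI[of _ "2 / e"]) auto
qed

end

context fk begin

definition goodS where
  "goodS M g p S \<longleftrightarrow>
     S \<subseteq> X \<times> UNIV \<and>
     (\<forall>x a b. (x,a) \<in> S \<longrightarrow> (x,b) \<in> S \<longrightarrow> a = b) \<and>
     (\<forall>x\<in>M. (x, g x) \<in> S) \<and>
     (\<forall>x a y b. (x,a) \<in> S \<longrightarrow> (y,b) \<in> S \<longrightarrow> (vadd x y, a + b) \<in> S) \<and>
     (\<forall>x a r. (x,a) \<in> S \<longrightarrow> (vsc (of_real r) x, r * a) \<in> S) \<and>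
     (\<forall>x a. (x,a) \<in> S \<longrightarrow> a \<le> p x)"

lemma goodSD:
  assumes "goodS M g p S"
  shows goodS_X: "S \<subseteq> X \<times> UNIV"
    and goodS_fun: "\<And>x a b. (x,a) \<in> S \<Longrightarrow> (x,b) \<in> S \<Longrightarrow> a = b"
    and goodS_M: "\<And>x. x \<in> M \<Longrightarrow> (x, g x) \<in> S"
    and goodS_add: "\<And>x a y b. (x,a) \<in> S \<Longrightarrow> (y,b) \<in> S \<Longrightarrow> (vadd x y, a + b) \<in> S"
    and goodS_sc: "\<And>x a r. (x,a) \<in> S \<Longrightarrow> (vsc (of_real r) x, r * a) \<in> S"
    and goodS_p: "\<And>x a. (x,a) \<in> S \<Longrightarrow> a \<le> p x"
  using assms unfolding goodS_def by blast+

lemma rHB: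
  fixes p :: "(nat \<Rightarrow> complex) \<Rightarrow> real" and g :: "(nat \<Rightarrow> complex) \<Rightarrow> real"
  assumes p_add: "\<And>x y. x \<in> X \<Longrightarrow> y \<in> X \<Longrightarrow> p (vadd x y) \<le> p x + p y"
    and p_sc: "\<And>x c. x \<in> X \<Longrightarrow> p (vsc c x) = cmod c * p x"
    and MX: "M \<subseteq> X" and M0: "(\<lambda>j. 0) \<in> M"
    and Madd: "\<And>x y. x \<in> M \<Longrightarrow> y \<in> M \<Longrightarrow> vadd x y \<in> M"
    and Msc: "\<And>x r. x \<in> M \<Longrightarrow> vsc (of_real r) x \<in> M"
    and gadd: "\<And>x y. x \<in> M \<Longrightarrow> y \<in> M \<Longrightarrow> g (vadd x y) = g x + g y"
    and gsc: "\<And>x r. x \<in> M \<Longrightarrow> g (vsc (of_real r) x) = r * g x"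
    and gp: "\<And>x. x \<in> M \<Longrightarrow> g x \<le> p x"
  shows "\<exists>G. (\<forall>x\<in>X. \<forall>y\<in>X. G (vadd x y) = G x + G y) \<and>
             (\<forall>r. \<forall>x\<in>X. G (vsc (of_real r) x) = r * G x) \<and>
             (\<forall>x\<in>M. G x = g x) \<and> (\<forall>x\<in>X. G x \<le> p x)"
proof -
  define A where "A = {S. goodS M g p S}"
  define G0 where "G0 = {(x, g x) | x. x \<in> M}"
  have g0: "g (\<lambda>j. 0) = 0"
  proof -
    have "vsc (of_real 0) (\<lambda>j. 0) = (\<lambda>j. 0)" by (simp add: vsc_def)
    then show ?thesis using gsc[OF M0, of 0] by simp
  qed
  have memG0: "(x,a) \<in> G0 \<longleftrightarrow> x \<in> M \<and> a = g x" for x a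
    unfolding G0_def by blast
  have "goodS M g p G0"
    unfolding goodS_def
  proof (intro conjI allI impI ballI)
    show "G0 \<subseteq> X \<times> UNIV"
    proof
      fix u assume "u \<in> G0" then show "u \<in> X \<times> UNIV" using MX memG0 by (cases u) auto
    qed
  next
    fix x a b assume "(x,a) \<in> G0" "(x,b) \<in> G0" then show "a = b" unfolding memG0 by simp
  next
    fix x assume "x \<in> M" then show "(x, g x) \<in> G0" unfolding memG0 by simp
  next
    fix x a y b assume "(x,a) \<in> G0" "(y,b) \<in> G0" then show "(vadd x y, a + b) \<in> G0"
      unfolding memG0 using Madd gadd by simp
  next
    fix x a r assume "(x,a) \<in> G0" then show "(vsc (of_real r) x, r * a) \<in> G0"
      unfolding memG0 using Msc gsc by simp
  next
    fix x a assume "(x,a) \<in> G0" then show "a \<le> p x" unfolding memG0 using gp by simp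
  qed
  then have G0A: "G0 \<in> A" unfolding A_def by simp
  have "\<exists>S\<in>A. \<forall>S'\<in>A. S \<subseteq> S' \<longrightarrow> S' = S"
  proof (rule Zorn_Lemma2, intro ballI)
    fix C assume C: "C \<in> chains A"
    show "\<exists>U\<in>A. \<forall>S\<in>C. S \<subseteq> U"
    proof (cases "C = {}")
      case True then show ?thesis using G0A by auto
    next
      case False
      then obtain S0 where S0: "S0 \<in> C" by auto
      have CA: "C \<subseteq> A" and ch: "\<And>S S'. S \<in> C \<Longrightarrow> S' \<in> C \<Longrightarrow> S \<subseteq> S' \<or> S' \<subseteq> S"
        using C unfolding chains_def chain_subset_def by auto
      have good: "\<And>S. S \<in> C \<Longrightarrow> goodS M g p S" using CA unfolding A_def by auto
      have two: "\<And>u v. u \<in> \<Union>C \<Longrightarrow> v \<in> \<Union>C \<Longrightarrow> \<exists>S\<in>C. u \<in> S \<and> v \<in> S"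
      proof -
        fix u v assume "u \<in> \<Union>C" "v \<in> \<Union>C"
        then obtain S1 S2 where "S1 \<in> C" "S2 \<in> C" "u \<in> S1" "v \<in> S2" by auto
        then show "\<exists>S\<in>C. u \<in> S \<and> v \<in> S" using ch[of S1 S2] by blast
      qed
      have "goodS M g p (\<Union>C)"
        unfolding goodS_def
      proof (intro conjI allI impI ballI)
        show "\<Union>C \<subseteq> X \<times> UNIV" using good unfolding goodS_def by blast
      next
        fix x a b assume "(x,a) \<in> \<Union>C" "(x,b) \<in> \<Union>C"
        then obtain S where "S \<in> C" "(x,a) \<in> S" "(x,b) \<in> S" using two by blast
        then show "a = b" using good unfolding goodS_def by blast
      next
        fix x assume "x \<in> M"
        then have "(x, g x) \<in> S0" using good[OF S0] unfolding goodS_def by blast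
        then show "(x, g x) \<in> \<Union>C" using S0 by blast
      next
        fix x a y b assume "(x,a) \<in> \<Union>C" "(y,b) \<in> \<Union>C"
        then obtain S where S: "S \<in> C" "(x,a) \<in> S" "(y,b) \<in> S" using two by blast
        then have "(vadd x y, a + b) \<in> S" using good[OF S(1)] unfolding goodS_def by blast
        then show "(vadd x y, a + b) \<in> \<Union>C" using S by blast
      next
        fix x a r assume "(x,a) \<in> \<Union>C"
        then obtain S where S: "S \<in> C" "(x,a) \<in> S" by blast
        then have "(vsc (of_real r) x, r * a) \<in> S" using good[OF S(1)] unfolding goodS_def by blast
        then show "(vsc (of_real r) x, r * a) \<in> \<Union>C" using S by blast
      next
        fix x a assume "(x,a) \<in> \<Union>C"
        then obtain S where S: "S \<in> C" "(x,a) \<in> S" by blast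
        then show "a \<le> p x" using good[OF S(1)] unfolding goodS_def by blast
      qed
      then show ?thesis unfolding A_def by blast
    qed
  qed
  then obtain S where SA: "S \<in> A" and max: "\<And>S'. S' \<in> A \<Longrightarrow> S \<subseteq> S' \<Longrightarrow> S' = S" by blast
  have gS: "goodS M g p S" using SA unfolding A_def by simp
  note SX = goodS_X[OF gS] and Sfun = goodS_fun[OF gS] and SM = goodS_M[OF gS]
    and Sadd = goodS_add[OF gS] and Ssc = goodS_sc[OF gS] and Sp = goodS_p[OF gS]
  have S0: "((\<lambda>j. 0), 0) \<in> S" using SM[OF M0] g0 by simp
  have dom: "\<forall>x0\<in>X. \<exists>a. (x0, a) \<in> S"
  proof (rule ccontr)
    assume "\<not> (\<forall>x0\<in>X. \<exists>a. (x0, a) \<in> S)"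
    then obtain x0 where x0: "x0 \<in> X" and nd: "\<And>a. (x0, a) \<notin> S" by blast
    define L where "L = {a - p (vsub y x0) | y a. (y, a) \<in> S}"
    have key: "a - p (vsub y x0) \<le> p (vadd z x0) - b" if "(y,a) \<in> S" "(z,b) \<in> S" for y a z b
    proof -
      have yX: "y \<in> X" and zX: "z \<in> X" using that SX by auto
      have "a + b \<le> p (vadd y z)" using Sp[OF Sadd[OF that]] .
      also have "vadd y z = vadd (vsub y x0) (vadd z x0)" by (simp add: vadd_def vsub_def fun_eq_iff)
      also have "p \<dots> \<le> p (vsub y x0) + p (vadd z x0)" by (rule p_add) (simp_all add: subX addX yX zX x0)
      finally show ?thesis by simp
    qed
    define c where "c = Sup L"
    have Lne: "L \<noteq> {}" using S0 unfolding L_def by blast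
    have Lbdd: "bdd_above L" unfolding L_def bdd_above_def
      using key[OF _ S0] by blast
    have c_lo: "a - p (vsub y x0) \<le> c" if "(y,a) \<in> S" for y a
      unfolding c_def by (rule cSup_upper[OF _ Lbdd]) (use that L_def in blast)
    have c_hi: "c \<le> p (vadd z x0) - b" if "(z,b) \<in> S" for z b
      unfolding c_def by (rule cSup_least[OF Lne]) (use key[OF _ that] L_def in blast)
    define S' where "S' = {(vadd y (vsc (of_real t) x0), a + t * c) | y a t. (y, a) \<in> S}"
    have memS': "(vadd y (vsc (of_real t) x0), a + t * c) \<in> S'" if "(y,a) \<in> S" for y a t
      unfolding S'_def by (rule CollectI, rule exI[of _ y], rule exI[of _ a], rule exI[of _ t]) (simp add: that)
    have vz: "vadd y (vsc (of_real 0) x0) = y" for y by (simp add: vadd_def vsc_def)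
    have SS': "S \<subseteq> S'"
    proof
      fix u assume "u \<in> S"
      then obtain y a where ya: "u = (y,a)" "(y,a) \<in> S" by (cases u) auto
      have "(vadd y (vsc (of_real 0) x0), a + 0 * c) \<in> S'" by (rule memS'[OF ya(2)])
      then have "(y, a + 0 * c) \<in> S'" unfolding vz .
      then show "u \<in> S'" unfolding ya(1) by simp
    qed
    have x0S': "(x0, c) \<in> S'"
    proof -
      have e1: "vadd (\<lambda>j. 0) (vsc (of_real 1) x0) = x0" by (simp add: vadd_def vsc_def)
      have "(vadd (\<lambda>j. 0) (vsc (of_real 1) x0), 0 + 1 * c) \<in> S'" by (rule memS'[OF S0])
      then show ?thesis unfolding e1 by simp
    qed
    have "goodS M g p S'"
      unfolding goodS_def
    proof (intro conjI allI impI ballI)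
      show "S' \<subseteq> X \<times> UNIV" unfolding S'_def using SX by (auto intro!: addX scX x0)
    next
      fix x a b assume xa: "(x,a) \<in> S'" and xb: "(x,b) \<in> S'"
      obtain y1 a1 t1 where 1: "(y1,a1) \<in> S" "x = vadd y1 (vsc (of_real t1) x0)" "a = a1 + t1 * c"
        using xa unfolding S'_def by blast
      obtain y2 a2 t2 where 2: "(y2,a2) \<in> S" "x = vadd y2 (vsc (of_real t2) x0)" "b = a2 + t2 * c"
        using xb unfolding S'_def by blast
      have eq: "y1 j + of_real t1 * x0 j = y2 j + of_real t2 * x0 j" for j
        using 1(2) 2(2) by (simp add: vadd_def vsc_def fun_eq_iff)
      have "t1 = t2"
      proof (rule ccontr)
        assume ne: "t1 \<noteq> t2"
        have "(vadd y2 (vsc (of_real (-1)) y1), a2 + (-1) * a1) \<in> S" using Sadd[OF 2(1) Ssc[OF 1(1)]] .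
        from Ssc[OF this, of "1 / (t1 - t2)"]
        have "(vsc (of_real (1 / (t1 - t2))) (vadd y2 (vsc (of_real (-1)) y1)), 1 / (t1 - t2) * (a2 + (-1) * a1)) \<in> S" .
        moreover have "vsc (of_real (1 / (t1 - t2))) (vadd y2 (vsc (of_real (-1)) y1)) = x0"
        proof
          fix j
          have "of_real (t1 - t2) * x0 j = y2 j - y1 j" using eq[of j] by (simp add: algebra_simps)
          moreover have "of_real (t1 - t2) \<noteq> (0::complex)" using ne by simp
          ultimately show "vsc (of_real (1 / (t1 - t2))) (vadd y2 (vsc (of_real (-1)) y1)) j = x0 j"
            by (simp add: vsc_def vadd_def field_simps)
        qed
        ultimately show False using nd by metis
      qed
      moreover then have "y1 = y2" using eq by (simp add: fun_eq_iff)
      ultimately show "a = b" using 1 2 Sfun by auto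
    next
      fix x assume "x \<in> M"
      then show "(x, g x) \<in> S'" using SS' SM by blast
    next
      fix x a y b assume "(x,a) \<in> S'" "(y,b) \<in> S'"
      then obtain y1 a1 t1 y2 a2 t2 where 1: "(y1,a1) \<in> S" "x = vadd y1 (vsc (of_real t1) x0)" "a = a1 + t1 * c"
        and 2: "(y2,a2) \<in> S" "y = vadd y2 (vsc (of_real t2) x0)" "b = a2 + t2 * c"
        unfolding S'_def by blast
      have "vadd x y = vadd (vadd y1 y2) (vsc (of_real (t1 + t2)) x0)"
        using 1 2 by (simp add: vadd_def vsc_def fun_eq_iff algebra_simps)
      moreover have "a + b = (a1 + a2) + (t1 + t2) * c" using 1 2 by (simp add: algebra_simps)
      ultimately show "(vadd x y, a + b) \<in> S'" unfolding S'_def using Sadd[OF 1(1) 2(1)] by blast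
    next
      fix x a r assume "(x,a) \<in> S'"
      then obtain y1 a1 t1 where 1: "(y1,a1) \<in> S" "x = vadd y1 (vsc (of_real t1) x0)" "a = a1 + t1 * c"
        unfolding S'_def by blast
      have "vsc (of_real r) x = vadd (vsc (of_real r) y1) (vsc (of_real (r * t1)) x0)"
        using 1 by (simp add: vadd_def vsc_def fun_eq_iff algebra_simps)
      moreover have "r * a = r * a1 + (r * t1) * c" using 1 by (simp add: algebra_simps)
      ultimately show "(vsc (of_real r) x, r * a) \<in> S'" unfolding S'_def using Ssc[OF 1(1)] by blast
    next
      fix x a assume "(x,a) \<in> S'"
      then obtain y a1 t where 1: "(y,a1) \<in> S" "x = vadd y (vsc (of_real t) x0)" "a = a1 + t * c"
        unfolding S'_def by blast
      have yX: "y \<in> X" using 1(1) SX by auto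
      show "a \<le> p x"
      proof (cases t "0::real" rule: linorder_cases)
        case equal
        then show ?thesis using 1 Sp[OF 1(1)] vz by simp
      next
        case greater
        have "c \<le> p (vadd (vsc (of_real (1/t)) y) x0) - (1/t) * a1" by (rule c_hi[OF Ssc[OF 1(1)]])
        then have "t * c \<le> t * p (vadd (vsc (of_real (1/t)) y) x0) - a1"
          using greater by (simp add: field_simps)
        also have "t * p (vadd (vsc (of_real (1/t)) y) x0) = p (vsc (of_real t) (vadd (vsc (of_real (1/t)) y) x0))"
          using p_sc[OF addX[OF scX[OF yX] x0], of "of_real t"] greater by simp
        also have "vsc (of_real t) (vadd (vsc (of_real (1/t)) y) x0) = x"
          using 1(2) greater by (simp add: vadd_def vsc_def fun_eq_iff field_simps)
        finally show ?thesis using 1(3) by simp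
      next
        case less
        define s where "s = - t"
        have sp: "s > 0" using less by (simp add: s_def)
        have "(1/s) * a1 - p (vsub (vsc (of_real (1/s)) y) x0) \<le> c" by (rule c_lo[OF Ssc[OF 1(1)]])
        then have "a1 - s * p (vsub (vsc (of_real (1/s)) y) x0) \<le> s * c"
          using sp by (simp add: field_simps)
        also have "s * p (vsub (vsc (of_real (1/s)) y) x0) = p (vsc (of_real s) (vsub (vsc (of_real (1/s)) y) x0))"
          using p_sc[OF subX[OF scX[OF yX] x0], of "of_real s"] sp by simp
        also have "vsc (of_real s) (vsub (vsc (of_real (1/s)) y) x0) = x"
          using 1(2) sp by (simp add: s_def vadd_def vsub_def vsc_def fun_eq_iff field_simps)
        finally show ?thesis using 1(3) by (simp add: s_def)
      qed
    qed
    then have "S' = S" using max SS' unfolding A_def by blast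
    then show False using x0S' nd by blast
  qed
  define G where "G x = (THE a. (x, a) \<in> S)" for x
  have GS: "(x, G x) \<in> S" if x: "x \<in> X" for x
  proof -
    obtain a where a: "(x,a) \<in> S" using dom x by blast
    have "(x, THE b. (x,b) \<in> S) \<in> S"
      by (rule theI[where P="\<lambda>b. (x,b) \<in> S", OF a]) (rule Sfun[OF _ a])
    then show ?thesis unfolding G_def .
  qed
  have Gval: "G x = a" if xa: "(x,a) \<in> S" for x a
  proof -
    have "x \<in> X" using xa SX by blast
    then show ?thesis using Sfun[OF GS xa] by blast
  qed
  show ?thesis
  proof (intro exI[of _ G] conjI ballI allI)
    fix x y assume x: "x \<in> X" and y: "y \<in> X"
    show "G (vadd x y) = G x + G y" by (rule Gval[OF Sadd[OF GS[OF x] GS[OF y]]])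
  next
    fix r x assume x: "x \<in> X"
    show "G (vsc (of_real r) x) = r * G x" by (rule Gval[OF Ssc[OF GS[OF x]]])
  next
    fix x assume x: "x \<in> M"
    show "G x = g x" by (rule Gval[OF SM[OF x]])
  next
    fix x assume x: "x \<in> X"
    show "G x \<le> p x" by (rule Sp[OF GS[OF x]])
  qed
qed

end

context fk begin

lemma vsc_decomp: "vsc c x = vadd (vsc (of_real (Re c)) x) (vsc (of_real (Im c)) (vsc \<i> x))"
proof
  fix j
  have "c = of_real (Re c) + \<i> * of_real (Im c)" by (simp add: complex_eq_iff)
  then have "c * x j = of_real (Re c) * x j + of_real (Im c) * (\<i> * x j)"
    by (metis (no_types, lifting) distrib_right mult.assoc mult.commute)
  then show "vsc c x j = vadd (vsc (of_real (Re c)) x) (vsc (of_real (Im c)) (vsc \<i> x)) j"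
    by (simp add: vsc_def vadd_def)
qed

lemma cHB:
  fixes p :: "(nat \<Rightarrow> complex) \<Rightarrow> real" and g :: "(nat \<Rightarrow> complex) \<Rightarrow> complex"
  assumes p_add: "\<And>x y. x \<in> X \<Longrightarrow> y \<in> X \<Longrightarrow> p (vadd x y) \<le> p x + p y"
    and p_sc: "\<And>x c. x \<in> X \<Longrightarrow> p (vsc c x) = cmod c * p x"
    and MX: "M \<subseteq> X" and M0: "(\<lambda>j. 0) \<in> M"
    and Madd: "\<And>x y. x \<in> M \<Longrightarrow> y \<in> M \<Longrightarrow> vadd x y \<in> M"
    and Msc: "\<And>x c. x \<in> M \<Longrightarrow> vsc c x \<in> M"
    and gadd: "\<And>x y. x \<in> M \<Longrightarrow> y \<in> M \<Longrightarrow> g (vadd x y) = g x + g y"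
    and gsc: "\<And>x c. x \<in> M \<Longrightarrow> g (vsc c x) = c * g x"
    and gp: "\<And>x. x \<in> M \<Longrightarrow> cmod (g x) \<le> p x"
  shows "\<exists>F. clin F \<and> (\<forall>x\<in>M. F x = g x) \<and> (\<forall>x\<in>X. cmod (F x) \<le> p x)"
proof -
  have "\<exists>G. (\<forall>x\<in>X. \<forall>y\<in>X. G (vadd x y) = G x + G y) \<and>
             (\<forall>r. \<forall>x\<in>X. G (vsc (of_real r) x) = r * G x) \<and>
             (\<forall>x\<in>M. G x = Re (g x)) \<and> (\<forall>x\<in>X. G x \<le> p x)"
  proof (rule rHB[OF p_add p_sc MX M0 Madd Msc])
    fix x y assume "x \<in> M" "y \<in> M"
    then show "Re (g (vadd x y)) = Re (g x) + Re (g y)" using gadd by simp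
  next
    fix x r assume "x \<in> M"
    then show "Re (g (vsc (of_real r) x)) = r * Re (g x)" using gsc by simp
  next
    fix x assume "x \<in> M"
    then show "Re (g x) \<le> p x" using gp[of x] complex_Re_le_cmod[of "g x"] by linarith
  qed
  then obtain U where Uadd: "\<And>x y. x \<in> X \<Longrightarrow> y \<in> X \<Longrightarrow> U (vadd x y) = U x + U y"
    and Usc: "\<And>r x. x \<in> X \<Longrightarrow> U (vsc (of_real r) x) = r * U x"
    and UM: "\<And>x. x \<in> M \<Longrightarrow> U x = Re (g x)" and Up: "\<And>x. x \<in> X \<Longrightarrow> U x \<le> p x"
    by blast
  have Uc: "U (vsc c x) = Re c * U x + Im c * U (vsc \<i> x)" if x: "x \<in> X" for c x
  proof -
    have "U (vsc c x) = U (vadd (vsc (of_real (Re c)) x) (vsc (of_real (Im c)) (vsc \<i> x)))"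
      by (simp only: vsc_decomp[of c x])
    also have "\<dots> = U (vsc (of_real (Re c)) x) + U (vsc (of_real (Im c)) (vsc \<i> x))"
      by (rule Uadd) (simp_all add: scX x)
    also have "\<dots> = Re c * U x + Im c * U (vsc \<i> x)"
      using Usc[OF x] Usc[OF scX[OF x]] by simp
    finally show ?thesis .
  qed
  have vsc_vsc: "vsc a (vsc b x) = vsc (a * b) x" for a b x by (simp add: vsc_def fun_eq_iff)
  have vsc_vadd: "vsc a (vadd x y) = vadd (vsc a x) (vsc a y)" for a x y
    by (simp add: vsc_def vadd_def fun_eq_iff algebra_simps)
  define F where "F x = Complex (U x) (- U (vsc \<i> x))" for x
  have ReF: "Re (F x) = U x" for x by (simp add: F_def)
  have clinF: "clin F" unfolding clin_def
  proof (intro conjI ballI allI)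
    fix x y assume x: "x \<in> X" and y: "y \<in> X"
    have "U (vsc \<i> (vadd x y)) = U (vsc \<i> x) + U (vsc \<i> y)"
      unfolding vsc_vadd by (rule Uadd) (simp_all add: scX x y)
    then show "F (vadd x y) = F x + F y" using Uadd[OF x y] by (simp add: F_def complex_eq_iff)
  next
    fix c x assume x: "x \<in> X"
    have 1: "U (vsc c x) = Re c * U x + Im c * U (vsc \<i> x)" by (rule Uc[OF x])
    have "U (vsc \<i> (vsc c x)) = U (vsc (\<i> * c) x)" by (simp add: vsc_vsc)
    also have "\<dots> = - Im c * U x + Re c * U (vsc \<i> x)" using Uc[OF x, of "\<i> * c"] by simp
    finally have 2: "U (vsc \<i> (vsc c x)) = - Im c * U x + Re c * U (vsc \<i> x)" .
    show "F (vsc c x) = c * F x" using 1 2 by (simp add: F_def complex_eq_iff algebra_simps)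
  qed
  have FM: "F x = g x" if x: "x \<in> M" for x
  proof -
    have "U (vsc \<i> x) = Re (g (vsc \<i> x))" using UM Msc[OF x] by blast
    also have "\<dots> = - Im (g x)" using gsc[OF x, of \<i>] by simp
    finally show ?thesis using UM[OF x] by (simp add: F_def complex_eq_iff)
  qed
  have Fb: "cmod (F x) \<le> p x" if x: "x \<in> X" for x
  proof -
    define z where "z = F x"
    define w where "w = (if z = 0 then 1 else cnj z / of_real (cmod z))"
    have wz: "w * z = of_real (cmod z)"
      by (cases "z = 0") (simp_all add: w_def complex_norm_square[symmetric] power2_eq_square field_simps)
    have wn: "cmod w = 1" by (cases "z = 0") (simp_all add: w_def norm_divide)
    have "F (vsc w x) = w * F x" using clinF x unfolding clin_def by blast
    then have "F (vsc w x) = of_real (cmod z)" using wz by (simp add: z_def)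
    then have "U (vsc w x) = cmod z" using ReF[of "vsc w x"] by simp
    moreover have "U (vsc w x) \<le> p (vsc w x)" by (rule Up[OF scX[OF x]])
    moreover have "p (vsc w x) = p x" using p_sc[OF x, of w] wn by simp
    ultimately show ?thesis by (simp add: z_def)
  qed
  show ?thesis using clinF FM Fb by blast
qed

lemma phi_add: "x \<in> phi \<Longrightarrow> y \<in> phi \<Longrightarrow> vadd x y \<in> phi"
proof -
  assume "x \<in> phi" "y \<in> phi"
  then have "finite ({j. x j \<noteq> 0} \<union> {j. y j \<noteq> 0})" by (simp add: phi_def)
  moreover have "{j. vadd x y j \<noteq> 0} \<subseteq> {j. x j \<noteq> 0} \<union> {j. y j \<noteq> 0}" by (auto simp: vadd_def)
  ultimately show ?thesis unfolding phi_def by (blast intro: finite_subset)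
qed

lemma phi_sc: "x \<in> phi \<Longrightarrow> vsc c x \<in> phi"
proof -
  assume "x \<in> phi"
  then have "finite {j. x j \<noteq> 0}" by (simp add: phi_def)
  moreover have "{j. vsc c x j \<noteq> 0} \<subseteq> {j. x j \<noteq> 0}" by (auto simp: vsc_def)
  ultimately show ?thesis unfolding phi_def by (blast intro: finite_subset)
qed

lemma phi_zero: "(\<lambda>j. 0) \<in> phi" by (simp add: phi_def)

lemma norming:
  assumes b: "b \<in> X"
  shows "\<exists>h. clin h \<and> (\<forall>y\<in>X. cmod (h y) \<le> Q k y) \<and> h b = Q k b"
proof (cases "b = (\<lambda>j. 0)")
  case True
  have "clin (\<lambda>y. 0)" by (simp add: clin_def)
  then show ?thesis using True Q_zero Q_nonneg by (intro exI[of _ "\<lambda>y. 0"]) auto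
next
  case False
  then obtain j0 where j0: "b j0 \<noteq> 0" by auto
  define M where "M = {vsc c b | c. True}"
  define g where "g y = y j0 / b j0 * Q k b" for y
  have memM: "y \<in> M \<longleftrightarrow> (\<exists>c. y = vsc c b)" for y unfolding M_def by blast
  have gM: "g (vsc c b) = c * Q k b" for c using j0 by (simp add: g_def vsc_def)
  have "\<exists>F. clin F \<and> (\<forall>x\<in>M. F x = g x) \<and> (\<forall>x\<in>X. cmod (F x) \<le> Q k x)"
  proof (rule cHB)
    show "\<And>x y. x \<in> X \<Longrightarrow> y \<in> X \<Longrightarrow> Q k (vadd x y) \<le> Q k x + Q k y" by (rule Q_add)
    show "\<And>x c. x \<in> X \<Longrightarrow> Q k (vsc c x) = cmod c * Q k x" by (rule Q_sc)
    show "M \<subseteq> X" unfolding M_def using scX[OF b] by blast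
    have "(\<lambda>j. 0) = vsc 0 b" by (simp add: vsc_def)
    then show "(\<lambda>j. 0) \<in> M" unfolding memM by blast
    fix x y assume "x \<in> M" "y \<in> M"
    then obtain c d where "x = vsc c b" "y = vsc d b" unfolding memM by blast
    moreover have "vadd (vsc c b) (vsc d b) = vsc (c + d) b" by (simp add: vadd_def vsc_def fun_eq_iff algebra_simps)
    ultimately show "vadd x y \<in> M" unfolding memM by blast
  next
    fix x c assume "x \<in> M"
    then obtain d where "x = vsc d b" unfolding memM by blast
    moreover have "vsc c (vsc d b) = vsc (c * d) b" by (simp add: vsc_def fun_eq_iff)
    ultimately show "vsc c x \<in> M" unfolding memM by blast
  next
    fix x y assume "x \<in> M" "y \<in> M"
    show "g (vadd x y) = g x + g y" by (simp add: g_def vadd_def add_divide_distrib distrib_right)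
  next
    fix x c assume "x \<in> M"
    show "g (vsc c x) = c * g x" by (simp add: g_def vsc_def field_simps)
  next
    fix x assume "x \<in> M"
    then obtain c where c: "x = vsc c b" unfolding memM by blast
    show "cmod (g x) \<le> Q k x" unfolding c gM Q_sc[OF b]
      using Q_nonneg[OF b, of k] by (simp add: norm_mult)
  qed
  then obtain F where F: "clin F" "\<And>x. x \<in> M \<Longrightarrow> F x = g x" "\<And>x. x \<in> X \<Longrightarrow> cmod (F x) \<le> Q k x"
    by blast
  have "b = vsc 1 b" by (simp add: vsc_def)
  then have "b \<in> M" unfolding memM by blast
  then have "F b = Q k b" using F(2) gM[of 1] \<open>b = vsc 1 b\<close> by simp
  then show ?thesis using F by blast
qed

end

context fk begin

lemma dual_iff: "f \<in> fk_dual X P \<longleftrightarrow> clin f \<and> continuous_map T euclidean f"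
  by (simp add: fk_dual_def clin_def vadd_def vsc_def)

lemma separate:
  assumes phiX: "phi \<subseteq> X" and x0: "x0 \<in> X" and nc: "x0 \<notin> T closure_of phi"
  shows "\<exists>F. F \<in> fk_dual X P \<and> (\<forall>y\<in>phi. F y = 0) \<and> F x0 = 1"
proof -
  obtain k e where e: "e > 0" and far: "\<And>y. y \<in> phi \<Longrightarrow> Q k (vsub y x0) \<ge> e"
    using nc x0 unfolding closure_iff[OF phiX] by (meson not_less)
  have x0phi: "x0 \<notin> phi"
  proof
    assume "x0 \<in> phi"
    then have "Q k (vsub x0 x0) \<ge> e" by (rule far)
    moreover have "vsub x0 x0 = (\<lambda>j. 0)" by (simp add: vsub_def)
    ultimately show False using e Q_zero by simp
  qed
  define M where "M = {vadd m (vsc c x0) | m c. m \<in> phi}"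
  have memM: "y \<in> M \<longleftrightarrow> (\<exists>m c. m \<in> phi \<and> y = vadd m (vsc c x0))" for y
    unfolding M_def by blast
  have uniq: "c = c'" if m: "m \<in> phi" "m' \<in> phi" and eq: "vadd m (vsc c x0) = vadd m' (vsc c' x0)" for m m' c c'
  proof (rule ccontr)
    assume ne: "c \<noteq> c'"
    have "vsc (1 / (c - c')) (vadd m' (vsc (-1) m)) \<in> phi"
      by (intro phi_sc phi_add m phi_sc)
    moreover have "vsc (1 / (c - c')) (vadd m' (vsc (-1) m)) = x0"
    proof
      fix j
      have "m j + c * x0 j = m' j + c' * x0 j" using eq by (simp add: vadd_def vsc_def fun_eq_iff)
      then have "(c - c') * x0 j = m' j - m j" by (simp add: algebra_simps)
      then show "vsc (1 / (c - c')) (vadd m' (vsc (-1) m)) j = x0 j"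
        using ne by (simp add: vsc_def vadd_def field_simps)
    qed
    ultimately show False using x0phi by simp
  qed
  define g where "g y = (THE c. \<exists>m\<in>phi. y = vadd m (vsc c x0))" for y
  have gval: "g (vadd m (vsc c x0)) = c" if m: "m \<in> phi" for m c
    unfolding g_def
  proof (rule the_equality)
    show "\<exists>m'\<in>phi. vadd m (vsc c x0) = vadd m' (vsc c x0)" using m by blast
    fix c' assume "\<exists>m'\<in>phi. vadd m (vsc c x0) = vadd m' (vsc c' x0)"
    then obtain m' where "m' \<in> phi" "vadd m (vsc c x0) = vadd m' (vsc c' x0)" by blast
    then show "c' = c" using uniq[OF m] by metis
  qed
  have "\<exists>F. clin F \<and> (\<forall>x\<in>M. F x = g x) \<and> (\<forall>x\<in>X. cmod (F x) \<le> Q k x / e)"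
  proof (rule cHB)
    fix x y assume "x \<in> X" "y \<in> X"
    then show "Q k (vadd x y) / e \<le> Q k x / e + Q k y / e"
      using Q_add e by (simp add: add_divide_distrib[symmetric] divide_right_mono)
  next
    fix x c assume "x \<in> X"
    then show "Q k (vsc c x) / e = cmod c * (Q k x / e)" using Q_sc by simp
  next
    show "M \<subseteq> X"
    proof
      fix y assume "y \<in> M"
      then obtain m c where "m \<in> phi" "y = vadd m (vsc c x0)" unfolding memM by blast
      then show "y \<in> X" using phiX x0 by (blast intro: addX scX)
    qed
  next
    have "(\<lambda>j. 0) = vadd (\<lambda>j. 0) (vsc 0 x0)" by (simp add: vadd_def vsc_def)
    then show "(\<lambda>j. 0) \<in> M" unfolding memM using phi_zero by blast
  next
    fix x y assume "x \<in> M" "y \<in> M"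
    then obtain m c m' c' where mc: "m \<in> phi" "x = vadd m (vsc c x0)" "m' \<in> phi" "y = vadd m' (vsc c' x0)"
      unfolding memM by blast
    then have "vadd x y = vadd (vadd m m') (vsc (c + c') x0)"
      by (simp add: vadd_def vsc_def fun_eq_iff algebra_simps)
    then show "vadd x y \<in> M" unfolding memM using phi_add[OF mc(1,3)] by blast
  next
    fix x d assume "x \<in> M"
    then obtain m c where mc: "m \<in> phi" "x = vadd m (vsc c x0)" unfolding memM by blast
    then have "vsc d x = vadd (vsc d m) (vsc (d * c) x0)"
      by (simp add: vadd_def vsc_def fun_eq_iff algebra_simps)
    then show "vsc d x \<in> M" unfolding memM using phi_sc[OF mc(1)] by blast
  next
    fix x y assume "x \<in> M" "y \<in> M"
    then obtain m c m' c' where mc: "m \<in> phi" "x = vadd m (vsc c x0)" "m' \<in> phi" "y = vadd m' (vsc c' x0)"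
      unfolding memM by blast
    then have "vadd x y = vadd (vadd m m') (vsc (c + c') x0)"
      by (simp add: vadd_def vsc_def fun_eq_iff algebra_simps)
    then show "g (vadd x y) = g x + g y" using gval phi_add[OF mc(1,3)] mc by simp
  next
    fix x d assume "x \<in> M"
    then obtain m c where mc: "m \<in> phi" "x = vadd m (vsc c x0)" unfolding memM by blast
    then have "vsc d x = vadd (vsc d m) (vsc (d * c) x0)"
      by (simp add: vadd_def vsc_def fun_eq_iff algebra_simps)
    then show "g (vsc d x) = d * g x" using gval phi_sc[OF mc(1)] mc by simp
  next
    fix x assume "x \<in> M"
    then obtain m c where mc: "m \<in> phi" "x = vadd m (vsc c x0)" unfolding memM by blast
    have xX: "x \<in> X" using mc phiX x0 by (blast intro: addX scX)
    have "cmod c * e \<le> Q k x"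
    proof (cases "c = 0")
      case True then show ?thesis using Q_nonneg[OF xX] by simp
    next
      case False
      define m2 where "m2 = vsc (- 1 / c) m"
      have m2: "m2 \<in> phi" unfolding m2_def by (rule phi_sc[OF mc(1)])
      have m2X: "m2 \<in> X" using m2 phiX by blast
      have "x = vsc c (vsub x0 m2)" using mc(2) False
        by (simp add: m2_def vadd_def vsub_def vsc_def fun_eq_iff field_simps)
      then have "Q k x = cmod c * Q k (vsub x0 m2)" using Q_sc[OF subX[OF x0 m2X]] by simp
      also have "Q k (vsub x0 m2) = Q k (vsub m2 x0)" by (rule Q_sub_sym[OF x0 m2X])
      finally show ?thesis using far[OF m2] by (simp add: mult_left_mono)
    qed
    then show "cmod (g x) \<le> Q k x / e" using gval[OF mc(1)] mc(2) e by (simp add: field_simps)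
  qed
  then obtain F where F: "clin F" "\<And>x. x \<in> M \<Longrightarrow> F x = g x" "\<And>x. x \<in> X \<Longrightarrow> cmod (F x) \<le> Q k x / e"
    by blast
  have cont: "continuous_map T euclidean F"
    by (rule bounded_cont[OF F(1), of "1 / e" k]) (use F(3) in simp)
  have "F x0 = 1"
  proof -
    have "x0 = vadd (\<lambda>j. 0) (vsc 1 x0)" by (simp add: vadd_def vsc_def)
    moreover have "vadd (\<lambda>j. 0) (vsc 1 x0) \<in> M" unfolding memM using phi_zero by blast
    ultimately show ?thesis using F(2) gval[OF phi_zero] by metis
  qed
  moreover have "F y = 0" if y: "y \<in> phi" for y
  proof -
    have "y = vadd y (vsc 0 x0)" by (simp add: vadd_def vsc_def)
    moreover have "vadd y (vsc 0 x0) \<in> M" unfolding memM using y by blast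
    ultimately show ?thesis using F(2) gval[OF y] by metis
  qed
  ultimately show ?thesis using F(1) cont unfolding dual_iff by blast
qed

end

definition vsum :: "nat set \<Rightarrow> (nat \<Rightarrow> nat \<Rightarrow> complex) \<Rightarrow> (nat \<Rightarrow> complex)" where
  "vsum A f = (\<lambda>i. \<Sum>j\<in>A. f j i)"

definition delta :: "nat \<Rightarrow> nat \<Rightarrow> complex" where
  "delta j = (\<lambda>i. if i = j then 1 else 0)"

lemma delta_phi: "delta j \<in> phi"
proof -
  have "{i. delta j i \<noteq> 0} \<subseteq> {j}" by (auto simp: delta_def)
  then show ?thesis unfolding phi_def by (blast intro: finite_subset)
qed

context fk begin

lemma vsum_X:
  assumes "finite A" and "\<And>j. j \<in> A \<Longrightarrow> f j \<in> X"
  shows "vsum A f \<in> X \<and> Q k (vsum A f) \<le> (\<Sum>j\<in>A. Q k (f j))"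
  using assms
proof (induction A rule: finite_induct)
  case empty
  have "vsum {} f = (\<lambda>j. 0)" by (simp add: vsum_def)
  then show ?case using zeroX Q_zero by simp
next
  case (insert a A)
  have fa: "f a \<in> X" using insert.prems by simp
  have IH: "vsum A f \<in> X \<and> Q k (vsum A f) \<le> (\<Sum>j\<in>A. Q k (f j))" using insert.IH insert.prems by simp
  have eq: "vsum (insert a A) f = vadd (f a) (vsum A f)"
    using insert.hyps by (simp add: vsum_def vadd_def fun_eq_iff)
  have "Q k (vadd (f a) (vsum A f)) \<le> Q k (f a) + Q k (vsum A f)" using Q_add fa IH by blast
  then show ?case unfolding eq using addX[OF fa] IH insert.hyps by simp
qed

end

locale fkpq = fk +
  fixes p q :: "nat \<Rightarrow> nat"
  assumes pq: "\<And>n. p n < q n" and qinf: "filterlim q at_top sequentially" and phiX: "phi \<subseteq> X"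
begin

abbreviation "TM n x \<equiv> Tmean p q n x"

definition wt :: "nat \<Rightarrow> nat \<Rightarrow> real" where
  "wt n j = real (card {k\<in>{p n<..q n}. j < k}) / real (q n - p n)"

lemma wt_alt: "wt n j = real (q n - max (p n) j) / real (q n - p n)"
proof -
  have "{k\<in>{p n<..q n}. j < k} = {max (p n) j<..q n}" by auto
  then show ?thesis unfolding wt_def by simp
qed

lemma wt_nonneg: "wt n j \<ge> 0" unfolding wt_def by simp

lemma wt_le1: "wt n j \<le> 1"
proof -
  have "q n - max (p n) j \<le> q n - p n" by simp
  moreover have "real (q n - p n) > 0" using pq[of n] by simp
  ultimately show ?thesis unfolding wt_alt by simp
qed

lemma wt_zero: "q n \<le> j \<Longrightarrow> wt n j = 0"
  unfolding wt_alt by simp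

lemma Tmean_eq: "TM n x = (\<lambda>j. of_real (wt n j) * x j)"
proof
  fix j
  have fin: "finite {p n<..q n}" by simp
  have "(\<Sum>k\<in>{p n<..q n}. section_seq x k j) = (\<Sum>k\<in>{p n<..q n}. if j < k then x j else 0)"
    by (simp add: section_seq_def)
  also have "\<dots> = (\<Sum>k\<in>{k\<in>{p n<..q n}. j < k}. x j)"
    by (rule sum.inter_filter[OF fin, symmetric])
  also have "\<dots> = of_nat (card {k\<in>{p n<..q n}. j < k}) * x j" by simp
  finally show "TM n x j = of_real (wt n j) * x j"
    unfolding Tmean_def wt_def by simp
qed

lemma Tmean_phi: "TM n x \<in> phi"
proof -
  have "{j. TM n x j \<noteq> 0} \<subseteq> {..<q n}"
  proof
    fix j assume "j \<in> {j. TM n x j \<noteq> 0}"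
    then have "wt n j \<noteq> 0" unfolding Tmean_eq by auto
    then show "j \<in> {..<q n}" using wt_zero[of n j] by (cases "q n \<le> j") auto
  qed
  then show ?thesis unfolding phi_def by (blast intro: finite_subset)
qed

lemma Tmean_X: "TM n x \<in> X" using Tmean_phi phiX by blast

lemma Tmean_vadd: "TM n (vadd x y) = vadd (TM n x) (TM n y)"
  unfolding Tmean_eq by (simp add: vadd_def fun_eq_iff algebra_simps)
lemma Tmean_vsub: "TM n (vsub x y) = vsub (TM n x) (TM n y)"
  unfolding Tmean_eq by (simp add: vsub_def fun_eq_iff algebra_simps)
lemma Tmean_vsc: "TM n (vsc c x) = vsc c (TM n x)"
  unfolding Tmean_eq by (simp add: vsc_def fun_eq_iff algebra_simps)

lemma coord_clin: "clin (\<lambda>x. x j)" by (simp add: clin_def vadd_def vsc_def)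

lemma coord_cont: "continuous_map T euclidean (\<lambda>x. x j)"
  using FK unfolding FK_space_def by blast

lemma coord_bound: "\<exists>K C. C \<ge> 0 \<and> (\<forall>x\<in>X. \<forall>j<N. cmod (x j) \<le> C * Q K x)"
proof (induction N)
  case 0 then show ?case by (intro exI[of _ 0] exI[of _ 0]) simp
next
  case (Suc N)
  then obtain K C where KC: "C \<ge> 0" "\<And>x j. x \<in> X \<Longrightarrow> j < N \<Longrightarrow> cmod (x j) \<le> C * Q K x" by blast
  obtain K' C' where KC': "C' \<ge> 0" "\<And>x. x \<in> X \<Longrightarrow> cmod (x N) \<le> C' * Q K' x"
    using cont_bounded[OF coord_clin coord_cont, of N] by blast
  have "cmod (x j) \<le> max C C' * Q (max K K') x" if x: "x \<in> X" and j: "j < Suc N" for x j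
  proof -
    have q1: "Q K x \<le> Q (max K K') x" "Q K' x \<le> Q (max K K') x" using Q_mono[OF x] by simp_all
    have q0: "Q K x \<ge> 0" "Q K' x \<ge> 0" using Q_nonneg[OF x] by simp_all
    show ?thesis
    proof (cases "j < N")
      case True
      have "C * Q K x \<le> max C C' * Q (max K K') x"
        using q1 q0 KC(1) by (intro mult_mono) auto
      then show ?thesis using KC(2)[OF x True] by linarith
    next
      case False
      then have jN: "j = N" using j by simp
      have "C' * Q K' x \<le> max C C' * Q (max K K') x"
        using q1 q0 KC'(1) by (intro mult_mono) auto
      then show ?thesis using KC'(2)[OF x] jN by simp
    qed
  qed
  then show ?case using KC(1) by (intro exI[of _ "max K K'"] exI[of _ "max C C'"]) auto
qed

lemma vsum_delta: "(\<And>i. i \<notin> A \<Longrightarrow> y i = 0) \<Longrightarrow> finite A \<Longrightarrow> y = vsum A (\<lambda>j. vsc (y j) (delta j))"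
proof -
  assume z: "\<And>i. i \<notin> A \<Longrightarrow> y i = 0" and fin: "finite A"
  show ?thesis
  proof
    fix i
    have "vsum A (\<lambda>j. vsc (y j) (delta j)) i = (\<Sum>j\<in>A. if i = j then y j else 0)"
      by (simp add: vsum_def vsc_def delta_def if_distrib cong: if_cong)
    also have "\<dots> = (if i \<in> A then y i else 0)" using fin by (simp add: sum.delta)
    also have "\<dots> = y i" using z by auto
    finally show "y i = vsum A (\<lambda>j. vsc (y j) (delta j)) i" by simp
  qed
qed

lemma vsum_delta_bound:
  assumes "finite A"
  shows "Q k (vsum A (\<lambda>j. vsc (c j) (delta j))) \<le> (\<Sum>j\<in>A. cmod (c j) * Q k (delta j))"
proof -
  have dX: "delta j \<in> X" for j using delta_phi phiX by blast
  have "Q k (vsum A (\<lambda>j. vsc (c j) (delta j))) \<le> (\<Sum>j\<in>A. Q k (vsc (c j) (delta j)))"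
    using vsum_X[OF assms, of "\<lambda>j. vsc (c j) (delta j)"] scX[OF dX] by blast
  also have "\<dots> = (\<Sum>j\<in>A. cmod (c j) * Q k (delta j))" using Q_sc[OF dX] by simp
  finally show ?thesis .
qed

lemma Tmean_bound: "\<exists>K C. C \<ge> 0 \<and> (\<forall>x\<in>X. Q k (TM n x) \<le> C * Q K x)"
proof -
  obtain K C where KC: "C \<ge> 0" "\<And>x j. x \<in> X \<Longrightarrow> j < q n \<Longrightarrow> cmod (x j) \<le> C * Q K x"
    using coord_bound[of "q n"] by blast
  define D where "D = (\<Sum>j<q n. Q k (delta j))"
  have dX: "delta j \<in> X" for j using delta_phi phiX by blast
  have D0: "D \<ge> 0" unfolding D_def by (rule sum_nonneg) (simp add: Q_nonneg[OF dX])
  have "Q k (TM n x) \<le> (C * D) * Q K x" if x: "x \<in> X" for x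
  proof -
    have z: "TM n x i = 0" if "i \<notin> {..<q n}" for i using that wt_zero[of n i] by (simp add: Tmean_eq)
    have "TM n x = vsum {..<q n} (\<lambda>j. vsc (TM n x j) (delta j))"
      by (rule vsum_delta) (use z in auto)
    then have "Q k (TM n x) = Q k (vsum {..<q n} (\<lambda>j. vsc (TM n x j) (delta j)))"
      by (rule arg_cong)
    also have "\<dots> \<le> (\<Sum>j<q n. cmod (TM n x j) * Q k (delta j))" by (rule vsum_delta_bound) simp
    also have "\<dots> \<le> (\<Sum>j<q n. (C * Q K x) * Q k (delta j))"
    proof (rule sum_mono)
      fix j assume j: "j \<in> {..<q n}"
      have "cmod (TM n x j) = wt n j * cmod (x j)" using wt_nonneg[of n j] by (simp add: Tmean_eq norm_mult)
      also have "\<dots> \<le> cmod (x j)" by (rule mult_left_le_one_le) (simp_all add: wt_nonneg wt_le1)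
      also have "\<dots> \<le> C * Q K x" using KC(2)[OF x] j by simp
      finally show "cmod (TM n x j) * Q k (delta j) \<le> (C * Q K x) * Q k (delta j)"
        using Q_nonneg[OF dX] by (simp add: mult_right_mono)
    qed
    also have "\<dots> = (C * D) * Q K x" by (simp add: D_def sum_distrib_left sum_distrib_right algebra_simps)
    finally show ?thesis .
  qed
  then show ?thesis using KC(1) D0 by (intro exI[of _ K] exI[of _ "C * D"]) auto
qed

lemma wt_tendsto: "(\<lambda>n. wt n j) \<longlonglongrightarrow> 1"
proof -
  have qr: "filterlim (\<lambda>n. real (q n)) at_top sequentially"
    by (rule filterlim_compose[OF filterlim_real_sequentially qinf])
  have lim0: "(\<lambda>n. real j / real (q n)) \<longlonglongrightarrow> 0"
    by (rule real_tendsto_divide_at_top[OF tendsto_const qr])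
  have ev: "eventually (\<lambda>n. j \<le> q n) sequentially"
    using qinf by (simp add: filterlim_at_top)
  have "eventually (\<lambda>n. norm (wt n j - 1) \<le> real j / real (q n)) sequentially"
  proof (rule eventually_mono[OF ev])
    fix n assume jq: "j \<le> q n"
    have pqn: "p n < q n" by (rule pq)
    show "norm (wt n j - 1) \<le> real j / real (q n)"
    proof (cases "j \<le> p n")
      case True
      then have "wt n j = 1" using pqn unfolding wt_alt by simp
      then show ?thesis by simp
    next
      case False
      then have w: "wt n j = (real (q n) - real j) / (real (q n) - real (p n))"
        using jq pqn unfolding wt_alt by (simp add: of_nat_diff)
      have pos: "real (q n) - real (p n) > 0" using pqn by simp
      have qpos: "real (q n) > 0" using pqn by simp
      have "1 - wt n j = (real j - real (p n)) / (real (q n) - real (p n))"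
        using pos unfolding w by (simp add: field_simps)
      also have "\<dots> \<le> real j / real (q n)"
      proof -
        have "real (p n) * real j \<le> real (p n) * real (q n)" using jq by (simp add: mult_left_mono)
        then have "(real j - real (p n)) * real (q n) \<le> real j * (real (q n) - real (p n))"
          by (simp add: algebra_simps)
        then show ?thesis using pos qpos by (simp add: divide_simps)
      qed
      finally have "1 - wt n j \<le> real j / real (q n)" .
      moreover have "1 - wt n j \<ge> 0" using wt_le1[of n j] by simp
      ultimately show ?thesis by simp
    qed
  qed
  then have "(\<lambda>n. wt n j - 1) \<longlonglongrightarrow> 0" by (rule Lim_null_comparison[OF _ lim0])
  then show ?thesis by (simp add: LIM_zero_iff)
qed

lemma Tmean_conv_phi:
  assumes x: "x \<in> phi"
  shows "limitin T (\<lambda>n. TM n x) x sequentially"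
proof -
  have xX: "x \<in> X" using x phiX by blast
  obtain N where N: "\<And>j. x j \<noteq> 0 \<Longrightarrow> j < N"
    using x unfolding phi_def finite_nat_set_iff_bounded by blast
  have dX: "delta j \<in> X" for j using delta_phi phiX by blast
  show ?thesis unfolding limitin_iff[OF Tmean_X]
  proof (intro conjI allI impI xX)
    fix k and e :: real assume e: "e > 0"
    define h where "h n = (\<Sum>j<N. cmod ((of_real (wt n j) - 1) * x j) * Q k (delta j))" for n
    have "h \<longlonglongrightarrow> (\<Sum>j<N. cmod ((of_real 1 - 1) * x j) * Q k (delta j))"
      unfolding h_def by (intro tendsto_intros wt_tendsto)
    then have h0: "h \<longlonglongrightarrow> 0" by simp
    have "eventually (\<lambda>n. h n < e) sequentially" using order_tendstoD(2)[OF h0 e] .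
    then show "eventually (\<lambda>n. Q k (vsub (TM n x) x) < e) sequentially"
    proof (rule eventually_mono)
      fix n assume hn: "h n < e"
      have z: "vsub (TM n x) x i = 0" if "i \<notin> {..<N}" for i
        using that N[of i] by (auto simp: vsub_def Tmean_eq)
      have yj: "vsub (TM n x) x j = (of_real (wt n j) - 1) * x j" for j
        by (simp add: vsub_def Tmean_eq algebra_simps)
      have "vsub (TM n x) x = vsum {..<N} (\<lambda>j. vsc (vsub (TM n x) x j) (delta j))"
        by (rule vsum_delta) (use z in auto)
      then have "Q k (vsub (TM n x) x) = Q k (vsum {..<N} (\<lambda>j. vsc ((of_real (wt n j) - 1) * x j) (delta j)))"
        unfolding yj by (rule arg_cong)
      also have "\<dots> \<le> h n" unfolding h_def by (rule vsum_delta_bound) simp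
      finally show "Q k (vsub (TM n x) x) < e" using hn by simp
    qed
  qed
qed

end

context fk begin

lemma geo3: "(\<Sum>l. (1/3::real) ^ l) = 3/2"
  using suminf_geometric[of "1/3::real"] by simp

lemma geo3_summable: "summable (\<lambda>l. (1/3::real) ^ l)"
  by (rule summable_geometric) simp

lemma geo3_tail: "(\<Sum>m. (1/3::real) ^ (m + Suc n)) = (1/3) ^ n / 2"
proof -
  have "(\<Sum>m. (1/3::real) ^ (m + Suc n)) = (\<Sum>m. (1/3) ^ m * (1/3) ^ Suc n)"
    by (simp add: power_add)
  also have "\<dots> = (\<Sum>m. (1/3::real) ^ m) * (1/3) ^ Suc n"
    by (rule suminf_mult2[OF geo3_summable, symmetric])
  also have "\<dots> = (1/3) ^ n / 2" unfolding geo3 by simp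
  finally show ?thesis .
qed

lemma mackey:
  assumes B: "\<And>n. B n \<in> X" and wb: "\<And>f. f \<in> fk_dual X P \<Longrightarrow> bounded (range (\<lambda>n. f (B n)))"
  shows "\<exists>M. \<forall>n. Q k (B n) \<le> M"
proof (rule ccontr)
  assume "\<not> (\<exists>M. \<forall>n. Q k (B n) \<le> M)"
  then have unb: "\<forall>M. \<exists>n. Q k (B n) > M" by (meson not_le)
  then have "\<forall>m. \<exists>n. Q k (B n) > 2 * 3 ^ m * (real m + 1)" by blast
  from choice[OF this] obtain nn where nn: "\<And>m. Q k (B (nn m)) > 2 * 3 ^ m * (real m + 1)"
    by blast
  define b where "b m = B (nn m)" for m
  have bX: "b m \<in> X" for m unfolding b_def by (rule B)
  have "\<forall>m. \<exists>h. clin h \<and> (\<forall>y\<in>X. cmod (h y) \<le> Q k y) \<and> h (b m) = Q k (b m)"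
    using norming[OF bX] by blast
  from choice[OF this] obtain h where h: "\<And>m. clin (h m)" "\<And>m y. y \<in> X \<Longrightarrow> cmod (h m y) \<le> Q k y"
    "\<And>m. h m (b m) = Q k (b m)"
    by blast
  define R where "R n \<tau> \<tau>' \<longleftrightarrow> (\<forall>l<n. \<tau>' l = \<tau> l) \<and> (\<tau>' n = (1/3) ^ n \<or> \<tau>' n = - ((1/3) ^ n)) \<and>
      cmod (\<Sum>l\<le>n. of_real (\<tau>' l) * h l (b n)) \<ge> (1/3) ^ n * Q k (b n)" for n :: nat and \<tau> \<tau>' :: "nat \<Rightarrow> real"
  have step: "\<exists>\<tau>'. R n \<tau> \<tau>'" for n \<tau>
  proof -
    define A where "A = (\<Sum>l<n. of_real (\<tau> l) * h l (b n))"
    define e where "e = (1/3::real) ^ n * Q k (b n)"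
    have sumeq: "(\<Sum>l\<le>n. of_real ((\<tau>(n := s)) l) * h l (b n)) = A + of_real s * of_real (Q k (b n))" for s
    proof -
      have "(\<Sum>l\<le>n. of_real ((\<tau>(n := s)) l) * h l (b n)) = (\<Sum>l<n. of_real ((\<tau>(n := s)) l) * h l (b n)) + of_real s * h n (b n)"
        by (simp add: lessThan_Suc_atMost[symmetric])
      also have "(\<Sum>l<n. of_real ((\<tau>(n := s)) l) * h l (b n)) = A" unfolding A_def by (rule sum.cong) auto
      finally show ?thesis using h(3)[of n] by simp
    qed
    have "2 * e \<le> cmod (A + of_real e) + cmod (A - of_real e)"
    proof -
      have e0: "e \<ge> 0" unfolding e_def using Q_nonneg[OF bX] by simp
      have "2 * e = cmod (of_real (2 * e) :: complex)" using e0 by simp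
      also have "(of_real (2 * e) :: complex) = (A + of_real e) - (A - of_real e)" by simp
      also have "cmod \<dots> \<le> cmod (A + of_real e) + cmod (A - of_real e)" by (rule norm_triangle_ineq4)
      finally show ?thesis .
    qed
    then have "cmod (A + of_real e) \<ge> e \<or> cmod (A - of_real e) \<ge> e" by linarith
    then show ?thesis
    proof
      assume a: "cmod (A + of_real e) \<ge> e"
      have "R n \<tau> (\<tau>(n := (1/3) ^ n))" unfolding R_def sumeq using a by (simp add: e_def)
      then show ?thesis by blast
    next
      assume a: "cmod (A - of_real e) \<ge> e"
      have "R n \<tau> (\<tau>(n := - ((1/3) ^ n)))" unfolding R_def sumeq using a by (simp add: e_def)
      then show ?thesis by blast
    qed
  qed
  have "\<exists>f. \<forall>n. True \<and> R n (f n) (f (Suc n))"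
    by (rule dependent_nat_choice) (use step in auto)
  then obtain fs where fs: "\<And>n. R n (fs n) (fs (Suc n))" by blast
  define t where "t l = fs (Suc l) l" for l
  have fst: "\<forall>l<m. fs m l = t l" for m
  proof (induction m)
    case 0 then show ?case by simp
  next
    case (Suc m)
    show ?case
    proof (intro allI impI)
      fix l assume l: "l < Suc m"
      show "fs (Suc m) l = t l"
      proof (cases "l < m")
        case True
        then have "fs (Suc m) l = fs m l" using fs[of m] unfolding R_def by blast
        then show ?thesis using Suc.IH True by simp
      next
        case False
        then have "l = m" using l by simp
        then show ?thesis by (simp add: t_def)
      qed
    qed
  qed
  have tabs: "\<bar>t l\<bar> = (1/3) ^ l" for l
    using fs[of l] unfolding R_def t_def by auto
  have tbig: "cmod (\<Sum>l\<le>n. of_real (t l) * h l (b n)) \<ge> (1/3) ^ n * Q k (b n)" for n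
  proof -
    have "(\<Sum>l\<le>n. of_real (fs (Suc n) l) * h l (b n)) = (\<Sum>l\<le>n. of_real (t l) * h l (b n))"
      by (rule sum.cong) (use fst[of "Suc n"] in auto)
    then show ?thesis using fs[of n] unfolding R_def by simp
  qed
  have termb: "norm (of_real (t l) * h l y) \<le> (1/3) ^ l * Q k y" if y: "y \<in> X" for l y
    using h(2)[OF y, of l] tabs[of l] by (simp add: norm_mult mult_left_mono)
  have summ: "summable (\<lambda>l. of_real (t l) * h l y)" if y: "y \<in> X" for y
  proof (rule summable_comparison_test')
    show "summable (\<lambda>l. (1/3::real) ^ l * Q k y)" by (rule summable_mult2[OF geo3_summable])
    show "norm (of_real (t l) * h l y) \<le> (1/3) ^ l * Q k y" for l by (rule termb[OF y])
  qed
  define F where "F y = (\<Sum>l. of_real (t l) * h l y)" for y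
  have clinF: "clin F" unfolding clin_def
  proof (intro conjI ballI allI)
    fix x y assume x: "x \<in> X" and y: "y \<in> X"
    have "F x + F y = (\<Sum>l. of_real (t l) * h l x + of_real (t l) * h l y)"
      unfolding F_def by (rule suminf_add[OF summ[OF x] summ[OF y]])
    also have "\<dots> = F (vadd x y)" unfolding F_def
      using h(1) x y unfolding clin_def by (simp add: distrib_left)
    finally show "F (vadd x y) = F x + F y" by simp
  next
    fix c x assume x: "x \<in> X"
    have "c * F x = (\<Sum>l. c * (of_real (t l) * h l x))"
      unfolding F_def by (rule suminf_mult[OF summ[OF x], symmetric])
    also have "\<dots> = F (vsc c x)" unfolding F_def
      using h(1) x unfolding clin_def by (simp add: algebra_simps)
    finally show "F (vsc c x) = c * F x" by simp
  qed
  have Fb: "cmod (F y) \<le> 3/2 * Q k y" if y: "y \<in> X" for y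
  proof -
    have "cmod (F y) \<le> (\<Sum>l. (1/3::real) ^ l * Q k y)"
      unfolding F_def by (rule norm_suminf_le[OF termb[OF y] summable_mult2[OF geo3_summable]])
    also have "\<dots> = (\<Sum>l. (1/3::real) ^ l) * Q k y" by (rule suminf_mult2[OF geo3_summable, symmetric])
    finally show ?thesis unfolding geo3 .
  qed
  have Fdual: "F \<in> fk_dual X P" unfolding dual_iff using clinF bounded_cont[OF clinF Fb] by blast
  have Flarge: "cmod (F (b n)) \<ge> real n + 1" for n
  proof -
    have s: "summable (\<lambda>l. of_real (t l) * h l (b n))" by (rule summ[OF bX])
    have split: "F (b n) = (\<Sum>m. of_real (t (m + Suc n)) * h (m + Suc n) (b n)) + (\<Sum>l<Suc n. of_real (t l) * h l (b n))"
      unfolding F_def by (rule suminf_split_initial_segment[OF s])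
    have tail: "cmod (\<Sum>m. of_real (t (m + Suc n)) * h (m + Suc n) (b n)) \<le> (1/3) ^ n / 2 * Q k (b n)"
    proof -
      have "cmod (\<Sum>m. of_real (t (m + Suc n)) * h (m + Suc n) (b n)) \<le> (\<Sum>m. (1/3::real) ^ (m + Suc n) * Q k (b n))"
      proof (rule norm_suminf_le)
        show "norm (of_real (t (m + Suc n)) * h (m + Suc n) (b n)) \<le> (1/3) ^ (m + Suc n) * Q k (b n)" for m
          by (rule termb[OF bX])
        show "summable (\<lambda>m. (1/3::real) ^ (m + Suc n) * Q k (b n))"
          by (rule summable_mult2[OF summable_ignore_initial_segment[OF geo3_summable]])
      qed
      also have "\<dots> = (\<Sum>m. (1/3::real) ^ (m + Suc n)) * Q k (b n)"
        by (rule suminf_mult2[OF summable_ignore_initial_segment[OF geo3_summable], symmetric])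
      finally show ?thesis unfolding geo3_tail .
    qed
    have head: "cmod (\<Sum>l<Suc n. of_real (t l) * h l (b n)) \<ge> (1/3) ^ n * Q k (b n)"
      using tbig[of n] by (simp add: lessThan_Suc_atMost)
    have "cmod (F (b n)) \<ge> (1/3) ^ n * Q k (b n) - (1/3) ^ n / 2 * Q k (b n)"
    proof -
      define Tl where "Tl = (\<Sum>m. of_real (t (m + Suc n)) * h (m + Suc n) (b n))"
      define H where "H = (\<Sum>l<Suc n. of_real (t l) * h l (b n))"
      have "F (b n) = H + Tl" using split unfolding Tl_def H_def by simp
      then have "cmod (F (b n)) = cmod (H + Tl)" by simp
      moreover have "cmod H - cmod Tl \<le> cmod (H + Tl)" by (rule norm_diff_ineq)
      ultimately show ?thesis using head tail unfolding Tl_def[symmetric] H_def[symmetric] by linarith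
    qed
    moreover have "(1/3::real) ^ n * Q k (b n) - (1/3) ^ n / 2 * Q k (b n) = Q k (b n) / (2 * 3 ^ n)"
      by (simp add: field_simps power_divide)
    moreover have "Q k (b n) / (2 * 3 ^ n) > real n + 1"
      using nn[of n] unfolding b_def by (simp add: field_simps)
    ultimately show ?thesis by simp
  qed
  obtain M where M: "\<And>n. cmod (F (B n)) \<le> M"
    using wb[OF Fdual] unfolding bounded_iff by auto
  obtain n :: nat where "real n > M" using reals_Archimedean2 by blast
  then show False using M[of "nn n"] Flarge[of n] unfolding b_def by simp
qed

end

context fkpq begin

abbreviation "Y \<equiv> T closure_of phi"

lemma Y_iff: "x \<in> Y \<longleftrightarrow> x \<in> X \<and> (\<forall>k e. e > 0 \<longrightarrow> (\<exists>y\<in>phi. Q k (vsub y x) < e))"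
  by (rule closure_iff[OF phiX])

lemma YX: "x \<in> Y \<Longrightarrow> x \<in> X" using Y_iff by blast

lemma phiY: "x \<in> phi \<Longrightarrow> x \<in> Y"
  using closure_of_subset[of phi T] phiX topspace_T by blast

lemma Y_add: assumes x: "x \<in> Y" and y: "y \<in> Y" shows "vadd x y \<in> Y"
  unfolding Y_iff
proof (intro conjI allI impI)
  show "vadd x y \<in> X" using x y YX addX by blast
  fix k and e :: real assume e: "e > 0"
  obtain a where a: "a \<in> phi" "Q k (vsub a x) < e/2" using x e unfolding Y_iff by (meson half_gt_zero)
  obtain b where b: "b \<in> phi" "Q k (vsub b y) < e/2" using y e unfolding Y_iff by (meson half_gt_zero)
  have aX: "a \<in> X" and bX: "b \<in> X" using a b phiX by blast+
  have "vsub (vadd a b) (vadd x y) = vadd (vsub a x) (vsub b y)" by (simp add: vadd_def vsub_def fun_eq_iff)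
  then have "Q k (vsub (vadd a b) (vadd x y)) \<le> Q k (vsub a x) + Q k (vsub b y)"
    using Q_add[OF subX[OF aX YX[OF x]] subX[OF bX YX[OF y]]] by simp
  then have "Q k (vsub (vadd a b) (vadd x y)) < e" using a(2) b(2) by linarith
  then show "\<exists>z\<in>phi. Q k (vsub z (vadd x y)) < e" using phi_add[OF a(1) b(1)] by blast
qed

lemma Y_sc: assumes x: "x \<in> Y" shows "vsc c x \<in> Y"
  unfolding Y_iff
proof (intro conjI allI impI)
  show "vsc c x \<in> X" using x YX scX by blast
  fix k and e :: real assume e: "e > 0"
  have c1: "cmod c + 1 > 0" using norm_ge_zero[of c] by linarith
  have e': "e / (cmod c + 1) > 0" using e c1 by (rule divide_pos_pos)
  obtain a where a: "a \<in> phi" "Q k (vsub a x) < e / (cmod c + 1)" using x e' unfolding Y_iff by blast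
  have aX: "a \<in> X" using a phiX by blast
  have "vsub (vsc c a) (vsc c x) = vsc c (vsub a x)" by (simp add: vsc_def vsub_def fun_eq_iff algebra_simps)
  then have "Q k (vsub (vsc c a) (vsc c x)) = cmod c * Q k (vsub a x)" using Q_sc[OF subX[OF aX YX[OF x]]] by simp
  also have "\<dots> \<le> cmod c * (e / (cmod c + 1))" using a(2) by (intro mult_left_mono) auto
  also have "\<dots> < e"
  proof -
    have "cmod c * e < (cmod c + 1) * e" using e by simp
    then show ?thesis using c1 by (simp add: field_simps)
  qed
  finally show "\<exists>z\<in>phi. Q k (vsub z (vsc c x)) < e" using phi_sc[OF a(1)] by blast
qed

lemma Y_sub: "x \<in> Y \<Longrightarrow> y \<in> Y \<Longrightarrow> vsub x y \<in> Y"
  unfolding vsub_as by (intro Y_add Y_sc)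

lemma Y_lim: assumes s: "\<And>n. s n \<in> Y" and l: "limitin T s x sequentially" shows "x \<in> Y"
  by (rule limitin_closedin[OF l closedin_closure_of]) (use s in auto)

lemma telescope:
  assumes xs: "\<And>n. x n \<in> X"
    and tri: "\<And>a b c. a \<in> X \<Longrightarrow> b \<in> X \<Longrightarrow> c \<in> X \<Longrightarrow> \<phi> (vsub a c) \<le> \<phi> (vsub a b) + \<phi> (vsub b c)"
    and z: "\<phi> (\<lambda>j. 0) = (0::real)"
  shows "\<phi> (vsub (x (m + j)) (x m)) \<le> (\<Sum>l<j. \<phi> (vsub (x (Suc (m + l))) (x (m + l))))"
proof (induction j)
  case 0
  have "vsub (x m) (x m) = (\<lambda>j. 0)" by (simp add: vsub_def)
  then show ?case using z by simp
next
  case (Suc j)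
  have "\<phi> (vsub (x (m + Suc j)) (x m)) \<le> \<phi> (vsub (x (Suc (m + j))) (x (m + j))) + \<phi> (vsub (x (m + j)) (x m))"
    using tri[OF xs xs xs] by simp
  then show ?case using Suc.IH by simp
qed

lemma geo2_sum: "(\<Sum>l<j. (1/2::real) ^ (m + l)) \<le> 2 * (1/2) ^ m"
proof -
  have "(\<Sum>l<j. (1/2::real) ^ (m + l)) = (1/2) ^ m * (\<Sum>l<j. (1/2) ^ l)"
    by (simp add: power_add sum_distrib_left)
  also have "(\<Sum>l<j. (1/2::real) ^ l) = 2 * (1 - (1/2) ^ j)"
    by (subst sum_gp_strict) simp
  also have "(1/2::real) ^ m * (2 * (1 - (1/2) ^ j)) \<le> 2 * (1/2) ^ m"
    by (simp add: field_simps)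
  finally show ?thesis .
qed

end

context fkpq begin

lemma TM_sub: "vsub (TM n a) (TM n b) = TM n (vsub a b)" by (simp add: Tmean_vsub)

lemma TM_zero: "TM n (\<lambda>j. 0) = (\<lambda>j. 0)" by (simp add: Tmean_eq)

lemma bump:
  assumes nb: "\<not> (\<exists>K C. C \<ge> 0 \<and> (\<forall>y\<in>Y. \<forall>n. Q k (TM n y) \<le> C * Q K y))" and dp: "\<delta> > 0"
  shows "\<exists>z\<in>Y. \<exists>n. Q K z \<le> \<delta> \<and> Q k (TM n z) \<ge> M"
proof -
  define M' where "M' = max M 1"
  have M'p: "M' > 0" "M' \<ge> M" unfolding M'_def by auto
  define C where "C = M' / \<delta>"
  have C0: "C \<ge> 0" using M'p dp unfolding C_def by simp
  obtain y n where y: "y \<in> Y" and yn: "Q k (TM n y) > C * Q K y" using nb C0 by (meson not_le)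
  have yX: "y \<in> X" by (rule YX[OF y])
  define a where "a = Q k (TM n y)"
  have QK0: "Q K y \<ge> 0" by (rule Q_nonneg[OF yX])
  have ap: "a > 0" using yn C0 QK0 unfolding a_def by (meson le_less_trans zero_le_mult_iff)
  show ?thesis
  proof (cases "Q K y = 0")
    case True
    define z where "z = vsc (of_real (M' / a)) y"
    have r0: "M' / a \<ge> 0" using M'p ap by simp
    have "Q K z = 0" unfolding z_def using Q_sc[OF yX, of K] True by simp
    moreover have "Q k (TM n z) = M'"
    proof -
      have "Q k (TM n z) = Q k (vsc (of_real (M' / a)) (TM n y))" unfolding z_def Tmean_vsc ..
      also have "\<dots> = cmod (complex_of_real (M' / a)) * a" unfolding a_def by (rule Q_sc[OF Tmean_X])
      also have "cmod (complex_of_real (M' / a)) = M' / a" by (simp only: norm_of_real abs_of_nonneg[OF r0])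
      then have "cmod (complex_of_real (M' / a)) * a = (M' / a) * a" by simp
      also have "\<dots> = M'" using ap by simp
      finally show ?thesis .
    qed
    moreover have "z \<in> Y" unfolding z_def by (rule Y_sc[OF y])
    ultimately show ?thesis using dp M'p by (intro bexI[of _ z] exI[of _ n]) auto
  next
    case False
    then have QKp: "Q K y > 0" using QK0 by simp
    define r where "r = \<delta> / Q K y"
    have rp: "r > 0" unfolding r_def using dp QKp by simp
    define z where "z = vsc (of_real r) y"
    have "Q K z = r * Q K y" unfolding z_def using Q_sc[OF yX, of K] rp by simp
    also have "\<dots> = \<delta>" unfolding r_def using QKp by simp
    finally have 1: "Q K z = \<delta>" .
    have "Q k (TM n z) = Q k (vsc (of_real r) (TM n y))" unfolding z_def Tmean_vsc ..
    also have "\<dots> = r * a" using Q_sc[OF Tmean_X, of k] rp unfolding a_def by simp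
    finally have 2: "Q k (TM n z) = r * a" .
    have "r * a > r * (C * Q K y)" using yn rp unfolding a_def by simp
    also have "r * (C * Q K y) = M'" unfolding r_def C_def using QKp dp by simp
    finally have "Q k (TM n z) > M'" using 2 by simp
    moreover have "z \<in> Y" unfolding z_def by (rule Y_sc[OF y])
    ultimately show ?thesis using 1 M'p by (intro bexI[of _ z] exI[of _ n]) auto
  qed
qed

lemma FK_complete:
  assumes "\<And>n. s n \<in> X" and "\<And>k e. e > 0 \<Longrightarrow> \<exists>N. \<forall>m\<ge>N. \<forall>n\<ge>N. Q k (vsub (s m) (s n)) < e"
  shows "\<exists>x\<in>X. limitin T s x sequentially"
proof -
  have c: "\<forall>s. (\<forall>n. s n \<in> X) \<and> (\<forall>k. \<forall>\<epsilon>>0. \<exists>N. \<forall>m\<ge>N. \<forall>n\<ge>N. P k (\<lambda>j. s m j - s n j) < \<epsilon>)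
          \<longrightarrow> (\<exists>x\<in>X. limitin T s x sequentially)"
    using FK unfolding FK_space_def by blast
  have "\<forall>k. \<forall>\<epsilon>>0. \<exists>N. \<forall>m\<ge>N. \<forall>n\<ge>N. P k (\<lambda>j. s m j - s n j) < \<epsilon>"
  proof (intro allI impI)
    fix k and e :: real assume e: "e > 0"
    obtain N where N: "\<forall>m\<ge>N. \<forall>n\<ge>N. Q k (vsub (s m) (s n)) < e" using assms(2)[OF e] by blast
    have "P k (\<lambda>j. s m j - s n j) < e" if "m \<ge> N" "n \<ge> N" for m n
    proof -
      have "P k (vsub (s m) (s n)) \<le> Q k (vsub (s m) (s n))" by (rule P_le_Q) (simp_all add: subX assms(1))
      then show ?thesis using N that unfolding vsub_def by fastforce
    qed
    then show "\<exists>N. \<forall>m\<ge>N. \<forall>n\<ge>N. P k (\<lambda>j. s m j - s n j) < e" by blast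
  qed
  then show ?thesis using c assms(1) by blast
qed

lemma equicont:
  assumes hyp: "Y \<subseteq> DB X P p q"
  shows "\<exists>K C. C \<ge> 0 \<and> (\<forall>y\<in>Y. \<forall>n. Q k (TM n y) \<le> C * Q K y)"
proof (rule ccontr)
  assume nb: "\<not> (\<exists>K C. C \<ge> 0 \<and> (\<forall>y\<in>Y. \<forall>n. Q k (TM n y) \<le> C * Q K y))"
  have mack: "\<exists>Mb. \<forall>n. Q k (TM n x) \<le> Mb" if x: "x \<in> Y" for x
  proof (rule mackey)
    show "TM n x \<in> X" for n by (rule Tmean_X)
    fix f assume "f \<in> fk_dual X P"
    then show "bounded (range (\<lambda>n. f (TM n x)))" using hyp x unfolding DB_def by blast
  qed
  have "\<forall>n. \<exists>K C. C \<ge> 0 \<and> (\<forall>x\<in>X. Q k (TM n x) \<le> C * Q K x)" using Tmean_bound by blast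
  then obtain Kn Cn where KCn: "\<And>n. Cn n \<ge> 0" "\<And>n x. x \<in> X \<Longrightarrow> Q k (TM n x) \<le> Cn n * Q (Kn n) x"
    by metis
  define Kb where "Kb N = (\<Sum>n\<le>N. Kn n)" for N
  define Cb where "Cb N = (\<Sum>n\<le>N. Cn n)" for N
  have Cb0: "Cb N \<ge> 0" for N unfolding Cb_def by (rule sum_nonneg) (use KCn(1) in auto)
  have Kb_ge: "Kn m \<le> Kb N" if "m \<le> N" for m N
    unfolding Kb_def using that by (intro member_le_sum) auto
  have Cb_ge: "Cn m \<le> Cb N" if "m \<le> N" for m N
    unfolding Cb_def using that KCn(1) by (intro member_le_sum) auto
  have Kb_mono: "Kb N \<le> Kb N'" if "N \<le> N'" for N N'
    unfolding Kb_def using that by (intro sum_mono2) auto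
  have Cb_mono: "Cb N \<le> Cb N'" if "N \<le> N'" for N N'
    unfolding Cb_def using that KCn(1) by (intro sum_mono2) auto
  define R where "R l st st' \<longleftrightarrow> (\<exists>z. z \<in> Y \<and>
      Q (max l (Kb (fst (snd st)))) z \<le> (1/2) ^ l / (1 + Cb (fst (snd st))) \<and>
      (fst st' = vadd (fst st) z \<or> fst st' = vsub (fst st) z) \<and>
      Q k (TM (snd (snd st')) (fst st')) \<ge> real l + 3 \<and>
      fst (snd st') = max (fst (snd st)) (snd (snd st')))"
    for l :: nat and st st' :: "(nat \<Rightarrow> complex) \<times> nat \<times> nat"
  have stepR: "\<exists>st'. fst st' \<in> Y \<and> R l st st'" if st: "fst st \<in> Y" for l st
  proof -
    define x where "x = fst st"
    define N where "N = fst (snd st)"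
    have xY: "x \<in> Y" using st unfolding x_def .
    have dp: "(1/2::real) ^ l / (1 + Cb N) > 0" using Cb0[of N] by (simp add: add_pos_nonneg)
    obtain z n where z: "z \<in> Y" "Q (max l (Kb N)) z \<le> (1/2) ^ l / (1 + Cb N)" "Q k (TM n z) \<ge> real l + 3"
      using bump[OF nb dp] by blast
    have xX: "x \<in> X" and zX: "z \<in> X" using xY z(1) YX by blast+
    have AX: "TM n x \<in> X" and ZX: "TM n z \<in> X" by (rule Tmean_X)+
    have "vsub (vadd (TM n x) (TM n z)) (vsub (TM n x) (TM n z)) = vsc 2 (TM n z)"
      by (simp add: vadd_def vsub_def vsc_def fun_eq_iff)
    then have "2 * Q k (TM n z) \<le> Q k (vadd (TM n x) (TM n z)) + Q k (vsub (TM n x) (TM n z))"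
      using Q_sub[OF addX[OF AX ZX] subX[OF AX ZX], of k] Q_sc[OF ZX, of k 2] by simp
    then have "Q k (TM n (vadd x z)) \<ge> real l + 3 \<or> Q k (TM n (vsub x z)) \<ge> real l + 3"
      using z(3) unfolding Tmean_vadd Tmean_vsub by linarith
    then obtain x' where x': "x' = vadd x z \<or> x' = vsub x z" "Q k (TM n x') \<ge> real l + 3" by blast
    have x'Y: "x' \<in> Y" using x'(1) Y_add[OF xY z(1)] Y_sub[OF xY z(1)] by blast
    have "R l st (x', max N n, n)" unfolding R_def
      using z(1,2) x' unfolding x_def N_def by auto
    then show ?thesis using x'Y by (intro exI[of _ "(x', max N n, n)"]) simp
  qed
  have "\<exists>f. \<forall>l. fst (f l) \<in> Y \<and> R l (f l) (f (Suc l))"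
  proof (rule dependent_nat_choice)
    show "\<exists>st :: (nat \<Rightarrow> complex) \<times> nat \<times> nat. fst st \<in> Y" using phiY[OF phi_zero] by (intro exI[of _ "((\<lambda>j. 0), 0, 0)"]) simp
    fix st :: "(nat \<Rightarrow> complex) \<times> nat \<times> nat" and l assume "fst st \<in> Y"
    then show "\<exists>st'. fst st' \<in> Y \<and> R l st st'" by (rule stepR)
  qed
  then obtain f where f: "\<And>l. fst (f l) \<in> Y" "\<And>l. R l (f l) (f (Suc l))" by blast
  define xs where "xs l = fst (f l)" for l
  define Ns where "Ns l = fst (snd (f l))" for l
  define ms where "ms l = snd (snd (f (Suc l)))" for l
  have "\<forall>l. \<exists>z. z \<in> Y \<and> Q (max l (Kb (Ns l))) z \<le> (1/2) ^ l / (1 + Cb (Ns l)) \<and>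
      (xs (Suc l) = vadd (xs l) z \<or> xs (Suc l) = vsub (xs l) z) \<and>
      Q k (TM (ms l) (xs (Suc l))) \<ge> real l + 3 \<and> Ns (Suc l) = max (Ns l) (ms l)"
    using f(2) unfolding R_def xs_def Ns_def ms_def by blast
  then obtain zs where zs: "\<And>l. zs l \<in> Y" "\<And>l. Q (max l (Kb (Ns l))) (zs l) \<le> (1/2) ^ l / (1 + Cb (Ns l))"
    "\<And>l. xs (Suc l) = vadd (xs l) (zs l) \<or> xs (Suc l) = vsub (xs l) (zs l)"
    "\<And>l. Q k (TM (ms l) (xs (Suc l))) \<ge> real l + 3" "\<And>l. Ns (Suc l) = max (Ns l) (ms l)"
    by metis
  have xsY: "xs l \<in> Y" for l unfolding xs_def by (rule f(1))
  have xsX: "xs l \<in> X" for l by (rule YX[OF xsY])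
  have zsX: "zs l \<in> X" for l by (rule YX[OF zs(1)])
  have Nmono: "Ns l \<le> Ns (l + j)" for l j
    by (induction j) (use zs(5) in auto)
  have dstep: "vsub (xs (Suc l)) (xs l) = zs l \<or> vsub (xs (Suc l)) (xs l) = vsc (-1) (zs l)" for l
    using zs(3)[of l] by (auto simp: vadd_def vsub_def vsc_def fun_eq_iff)
  have Qd: "Q i (vsub (xs (Suc l)) (xs l)) = Q i (zs l)" for i l
    using dstep[of l] Q_sc[OF zsX, of i "-1"] by auto
  have QTd: "Q k (TM n (vsub (xs (Suc l)) (xs l))) = Q k (TM n (zs l))" for n l
    using dstep[of l] Q_sc[OF Tmean_X, of k "-1" n "zs l"] by (auto simp: Tmean_vsc)
  have zsmall: "Q i (zs l) \<le> (1/2) ^ l" if "i \<le> l" for i l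
  proof -
    have "Q i (zs l) \<le> Q (max l (Kb (Ns l))) (zs l)" using that by (intro Q_mono zsX) simp
    also have "\<dots> \<le> (1/2) ^ l / (1 + Cb (Ns l))" by (rule zs(2))
    also have "\<dots> \<le> (1/2) ^ l" using Cb0[of "Ns l"] by (simp add: divide_le_eq add_pos_nonneg)
    finally show ?thesis .
  qed
  have zsmallT: "Q k (TM (ms l) (zs j)) \<le> (1/2) ^ j" if "Suc l \<le> j" for l j
  proof -
    have mN: "ms l \<le> Ns j"
    proof -
      have "ms l \<le> Ns (Suc l)" using zs(5)[of l] by simp
      also have "Ns (Suc l) \<le> Ns j" using Nmono[of "Suc l" "j - Suc l"] that by simp
      finally show ?thesis .
    qed
    have "Q k (TM (ms l) (zs j)) \<le> Cn (ms l) * Q (Kn (ms l)) (zs j)" by (rule KCn(2)[OF zsX])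
    also have "\<dots> \<le> Cb (Ns j) * Q (max j (Kb (Ns j))) (zs j)"
    proof (rule mult_mono)
      show "Cn (ms l) \<le> Cb (Ns j)" by (rule Cb_ge[OF mN])
      show "Q (Kn (ms l)) (zs j) \<le> Q (max j (Kb (Ns j))) (zs j)"
        using Kb_ge[OF mN] by (intro Q_mono zsX) simp
    qed (use Cb0 Q_nonneg[OF zsX] in auto)
    also have "\<dots> \<le> Cb (Ns j) * ((1/2) ^ j / (1 + Cb (Ns j)))"
      by (rule mult_left_mono[OF zs(2) Cb0])
    also have "\<dots> \<le> (1/2) ^ j"
    proof -
      have "Cb (Ns j) \<le> 1 + Cb (Ns j)" by simp
      then have "Cb (Ns j) / (1 + Cb (Ns j)) \<le> 1" using Cb0[of "Ns j"] by (simp add: divide_le_eq)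
      then have "Cb (Ns j) / (1 + Cb (Ns j)) * (1/2) ^ j \<le> 1 * (1/2) ^ j"
        by (intro mult_right_mono) auto
      then show ?thesis by (simp add: field_simps)
    qed
    finally show ?thesis .
  qed
  have cauchy: "Q i (vsub (xs (m + j)) (xs m)) \<le> 2 * (1/2) ^ m" if "i \<le> m" for i m j
  proof -
    have "Q i (vsub (xs (m + j)) (xs m)) \<le> (\<Sum>l<j. Q i (vsub (xs (Suc (m + l))) (xs (m + l))))"
      by (rule telescope[OF xsX]) (use Q_tri Q_zero in auto)
    also have "\<dots> \<le> (\<Sum>l<j. (1/2::real) ^ (m + l))"
      by (rule sum_mono) (use zsmall that in \<open>simp add: Qd\<close>)
    also have "\<dots> \<le> 2 * (1/2) ^ m" by (rule geo2_sum)
    finally show ?thesis .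
  qed
  have "\<exists>xl\<in>X. limitin T xs xl sequentially"
  proof (rule FK_complete[OF xsX])
    fix i and e :: real assume e: "e > 0"
    obtain N0 where N0: "(1/2::real) ^ N0 < e / 2" using real_arch_pow_inv[of "e/2" "1/2"] e by auto
    define N where "N = N0 + i"
    have "Q i (vsub (xs m) (xs n)) < e" if mn: "m \<ge> N" "n \<ge> N" for m n
    proof -
      have pN: "(1/2::real) ^ N \<le> (1/2) ^ N0" unfolding N_def by (simp add: power_decreasing)
      have b: "Q i (vsub (xs (a + j)) (xs a)) < e" if "a \<ge> N" for a j
      proof -
        have "(1/2::real) ^ a \<le> (1/2) ^ N" using that by (simp add: power_decreasing)
        moreover have "i \<le> a" using that unfolding N_def by simp
        ultimately show ?thesis using cauchy[of i a j] pN N0 by linarith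
      qed
      show ?thesis
      proof (cases "n \<le> m")
        case True
        then show ?thesis using b[OF mn(2), of "m - n"] by simp
      next
        case False
        then have "Q i (vsub (xs n) (xs m)) < e" using b[OF mn(1), of "n - m"] by simp
        then show ?thesis using Q_sub_sym[OF xsX xsX] by simp
      qed
    qed
    then show "\<exists>N. \<forall>m\<ge>N. \<forall>n\<ge>N. Q i (vsub (xs m) (xs n)) < e" by blast
  qed
  then obtain xl where xlX: "xl \<in> X" and lim: "limitin T xs xl sequentially" by blast
  have xlY: "xl \<in> Y" by (rule Y_lim[OF xsY lim])
  have tailQ: "Q i (vsub xl (xs m)) \<le> 2 * (1/2) ^ m" if im: "i \<le> m" for i m
  proof (rule field_le_epsilon)
    fix e :: real assume e: "e > 0"
    have "eventually (\<lambda>n. Q i (vsub (xs n) xl) < e) sequentially"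
      using lim e unfolding limitin_iff[OF xsX] by blast
    then obtain n0 where n0: "\<And>n. n \<ge> n0 \<Longrightarrow> Q i (vsub (xs n) xl) < e"
      unfolding eventually_sequentially by blast
    define n where "n = m + n0"
    have "Q i (vsub xl (xs m)) \<le> Q i (vsub xl (xs n)) + Q i (vsub (xs n) (xs m))"
      by (rule Q_tri[OF xlX xsX xsX])
    also have "Q i (vsub xl (xs n)) = Q i (vsub (xs n) xl)" by (rule Q_sub_sym[OF xlX xsX])
    also have "Q i (vsub (xs n) (xs m)) \<le> 2 * (1/2) ^ m" unfolding n_def by (rule cauchy[OF im])
    finally show "Q i (vsub xl (xs m)) \<le> 2 * (1/2) ^ m + e" using n0[of n] unfolding n_def by simp
  qed
  obtain Mb where Mb: "\<And>n. Q k (TM n xl) \<le> Mb" using mack[OF xlY] by blast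
  obtain l :: nat where l: "real l > Mb" using reals_Archimedean2 by blast
  define n where "n = ms l"
  define C where "C = Cn n"
  define K where "K = Kn n"
  have C0: "C \<ge> 0" unfolding C_def by (rule KCn(1))
  have A: "Q k (TM n (vsub (xs (Suc l + j)) (xs (Suc l)))) \<le> 1" for j
  proof -
    have "Q k (TM n (vsub (xs (Suc l + j)) (xs (Suc l)))) \<le>
        (\<Sum>a<j. Q k (TM n (vsub (xs (Suc (Suc l + a))) (xs (Suc l + a)))))"
    proof (rule telescope[OF xsX])
      fix a b c assume abc: "a \<in> X" "b \<in> X" "c \<in> X"
      show "Q k (TM n (vsub a c)) \<le> Q k (TM n (vsub a b)) + Q k (TM n (vsub b c))"
        unfolding TM_sub[symmetric] by (rule Q_tri[OF Tmean_X Tmean_X Tmean_X])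
    qed (simp add: TM_zero Q_zero)
    also have "\<dots> \<le> (\<Sum>a<j. (1/2::real) ^ (Suc l + a))"
    proof (rule sum_mono)
      fix a assume "a \<in> {..<j}"
      have "Q k (TM n (vsub (xs (Suc (Suc l + a))) (xs (Suc l + a)))) = Q k (TM n (zs (Suc l + a)))"
        by (rule QTd)
      also have "\<dots> \<le> (1/2) ^ (Suc l + a)" unfolding n_def by (rule zsmallT) simp
      finally show "Q k (TM n (vsub (xs (Suc (Suc l + a))) (xs (Suc l + a)))) \<le> (1/2) ^ (Suc l + a)" .
    qed
    also have "\<dots> \<le> 2 * (1/2) ^ Suc l" by (rule geo2_sum)
    also have "\<dots> \<le> 1" by (simp add: power_le_one)
    finally show ?thesis .
  qed
  obtain M0 where M0: "(1/2::real) ^ M0 < 1 / (2 * (C + 1))"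
    using real_arch_pow_inv[of "1 / (2 * (C + 1))" "1/2"] C0 by auto
  define MM where "MM = Suc l + (M0 + K)"
  have B: "C * Q K (vsub xl (xs MM)) \<le> 1"
  proof -
    have "Q K (vsub xl (xs MM)) \<le> 2 * (1/2) ^ MM" by (rule tailQ) (simp add: MM_def)
    also have "(1/2::real) ^ MM \<le> (1/2) ^ M0" by (rule power_decreasing) (simp_all add: MM_def)
    finally have "Q K (vsub xl (xs MM)) \<le> 2 * (1/2) ^ M0" by simp
    also have "\<dots> \<le> 1 / (C + 1)" using M0 C0 by (simp add: field_simps)
    finally have "Q K (vsub xl (xs MM)) \<le> 1 / (C + 1)" .
    then have "C * Q K (vsub xl (xs MM)) \<le> C * (1 / (C + 1))" using C0 by (rule mult_left_mono)
    also have "\<dots> \<le> 1" using C0 by (simp add: field_simps)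
    finally show ?thesis .
  qed
  have tail2: "Q k (TM n (vsub xl (xs (Suc l)))) \<le> 2"
  proof -
    have "Q k (TM n (vsub xl (xs (Suc l)))) \<le> Q k (TM n (vsub xl (xs MM))) + Q k (TM n (vsub (xs MM) (xs (Suc l))))"
      unfolding TM_sub[symmetric] by (rule Q_tri[OF Tmean_X Tmean_X Tmean_X])
    also have "Q k (TM n (vsub xl (xs MM))) \<le> C * Q K (vsub xl (xs MM))"
      unfolding C_def K_def by (rule KCn(2)[OF subX[OF xlX xsX]])
    also have "Q k (TM n (vsub (xs MM) (xs (Suc l)))) \<le> 1"
      using A[of "M0 + K"] unfolding MM_def by simp
    finally show ?thesis using B by simp
  qed
  have "\<bar>Q k (TM n xl) - Q k (TM n (xs (Suc l)))\<bar> \<le> Q k (vsub (TM n xl) (TM n (xs (Suc l))))"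
    by (rule Q_rev_tri[OF Tmean_X Tmean_X])
  then have "Q k (TM n xl) \<ge> Q k (TM n (xs (Suc l))) - 2" using tail2 unfolding TM_sub by linarith
  moreover have "Q k (TM n (xs (Suc l))) \<ge> real l + 3" unfolding n_def by (rule zs(4))
  ultimately show False using Mb[of n] l by linarith
qed

end

context fkpq begin

lemma Y_conv:
  assumes hyp: "Y \<subseteq> DB X P p q" and x: "x \<in> Y"
  shows "limitin T (\<lambda>n. TM n x) x sequentially"
  unfolding limitin_iff[OF Tmean_X]
proof (intro conjI allI impI)
  have xX: "x \<in> X" by (rule YX[OF x])
  show "x \<in> X" by (rule xX)
  fix k and e :: real assume e: "e > 0"
  obtain K C where KC: "C \<ge> 0" "\<And>y n. y \<in> Y \<Longrightarrow> Q k (TM n y) \<le> C * Q K y"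
    using equicont[OF hyp, of k] by blast
  define \<delta> where "\<delta> = e / (3 * (C + 1))"
  have dp: "\<delta> > 0" unfolding \<delta>_def using e KC(1) by simp
  obtain \<phi> where ph: "\<phi> \<in> phi" "Q (max k K) (vsub \<phi> x) < \<delta>" using x dp unfolding Y_iff by blast
  have phX: "\<phi> \<in> X" using ph(1) phiX by blast
  have phY: "\<phi> \<in> Y" by (rule phiY[OF ph(1)])
  have e3: "e / 3 > 0" using e by simp
  have "eventually (\<lambda>n. Q k (vsub (TM n \<phi>) \<phi>) < e / 3) sequentially"
    using Tmean_conv_phi[OF ph(1)] e3 unfolding limitin_iff[OF Tmean_X] by blast
  then show "eventually (\<lambda>n. Q k (vsub (TM n x) x) < e) sequentially"
  proof (rule eventually_mono)
    fix n assume n: "Q k (vsub (TM n \<phi>) \<phi>) < e / 3"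
    have q1: "Q K (vsub \<phi> x) \<le> Q (max k K) (vsub \<phi> x)" by (rule Q_mono[OF subX[OF phX xX]]) simp
    have q2: "Q k (vsub \<phi> x) \<le> Q (max k K) (vsub \<phi> x)" by (rule Q_mono[OF subX[OF phX xX]]) simp
    have "Q k (vsub (TM n x) (TM n \<phi>)) = Q k (TM n (vsub x \<phi>))" unfolding TM_sub ..
    also have "\<dots> \<le> C * Q K (vsub x \<phi>)" by (rule KC(2)[OF Y_sub[OF x phY]])
    also have "Q K (vsub x \<phi>) = Q K (vsub \<phi> x)" by (rule Q_sub_sym[OF xX phX])
    finally have a1: "Q k (vsub (TM n x) (TM n \<phi>)) \<le> C * Q K (vsub \<phi> x)" .
    have a2: "C * Q K (vsub \<phi> x) \<le> C * \<delta>" using q1 ph(2) KC(1) by (intro mult_left_mono) auto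
    have "Q k (vsub (TM n x) x) \<le> Q k (vsub (TM n x) (TM n \<phi>)) + Q k (vsub (TM n \<phi>) x)"
      by (rule Q_tri[OF Tmean_X Tmean_X xX])
    also have "Q k (vsub (TM n \<phi>) x) \<le> Q k (vsub (TM n \<phi>) \<phi>) + Q k (vsub \<phi> x)"
      by (rule Q_tri[OF Tmean_X phX xX])
    finally have "Q k (vsub (TM n x) x) < C * \<delta> + e / 3 + \<delta>" using a1 a2 n q2 ph(2) by linarith
    also have "C * \<delta> + e / 3 + \<delta> = e / 3 + e / 3"
    proof -
      have c1: "C + 1 \<noteq> 0" using KC(1) by simp
      have "(C + 1) * \<delta> = ((C + 1) * e) / ((C + 1) * 3)" unfolding \<delta>_def by (simp add: mult.commute)
      also have "\<dots> = e / 3"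
      proof -
        have "\<forall>D::real. D \<noteq> 0 \<longrightarrow> D * e / (D * 3) = e / 3" by simp
        then show ?thesis using c1 by blast
      qed
      finally have "(C + 1) * \<delta> = e / 3" .
      then show ?thesis by (simp add: algebra_simps)
    qed
    also have "\<dots> < e" using e by simp
    finally show "Q k (vsub (TM n x) x) < e" .
  qed
qed

lemma DW_sub_Y:
  assumes x: "x \<in> DW X P p q"
  shows "x \<in> Y"
proof (rule ccontr)
  assume nx: "x \<notin> Y"
  have xX: "x \<in> X" using x unfolding DW_def by simp
  have conv: "\<And>f. f \<in> fk_dual X P \<Longrightarrow> (\<lambda>n. f (TM n x)) \<longlonglongrightarrow> f x"
    using x unfolding DW_def by simp
  obtain F where F: "F \<in> fk_dual X P" "\<And>y. y \<in> phi \<Longrightarrow> F y = 0" "F x = 1"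
    using separate[OF phiX xX nx] by blast
  have "(\<lambda>n. F (TM n x)) = (\<lambda>n. 0)" using F(2)[OF Tmean_phi] by simp
  then have "(\<lambda>n. 0::complex) \<longlonglongrightarrow> 1" using conv[OF F(1)] F(3) by simp
  then have "(0::complex) = 1" by (rule LIMSEQ_unique[OF tendsto_const])
  then show False by simp
qed

lemma DS_sub_DW: "DS X P p q \<subseteq> DW X P p q"
proof
  fix x assume "x \<in> DS X P p q"
  then have xX: "x \<in> X" and lim: "limitin T (\<lambda>n. TM n x) x sequentially" unfolding DS_def by simp_all
  have "(\<lambda>n. f (TM n x)) \<longlonglongrightarrow> f x" if f: "f \<in> fk_dual X P" for f
  proof -
    have c: "continuous_map T euclidean f" using f unfolding dual_iff by blast
    have "limitin euclidean (f \<circ> (\<lambda>n. TM n x)) (f x) sequentially"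
      by (rule continuous_map_limit[OF c lim])
    then show ?thesis by (simp add: o_def)
  qed
  then show "x \<in> DW X P p q" unfolding DW_def using xX by simp
qed

end

theorem mainTheorem10:
  fixes X :: "(nat \<Rightarrow> complex) set" and P :: "nat \<Rightarrow> (nat \<Rightarrow> complex) \<Rightarrow> real"
    and p q :: "nat \<Rightarrow> nat"
  assumes "FK_space X P"
    and "\<And>n. p n < q n"
    and "filterlim q at_top sequentially"
    and "phi \<subseteq> X"
    and "(fk_topology X P) closure_of phi \<subseteq> DB X P p q"
  shows "has_sigma X P p q ((fk_topology X P) closure_of phi)
       \<and> DS X P p q = DW X P p q
       \<and> DW X P p q = (fk_topology X P) closure_of phi"
proof -
  interpret F: fkpq X P p q
    by (unfold_locales) (use assms in auto)
  have sig: "has_sigma X P p q ((fk_topology X P) closure_of phi)"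
    unfolding has_sigma_def using F.Y_conv[OF assms(5)] by simp
  have YDS: "(fk_topology X P) closure_of phi \<subseteq> DS X P p q"
  proof
    fix x assume x: "x \<in> (fk_topology X P) closure_of phi"
    then show "x \<in> DS X P p q" unfolding DS_def using F.YX[OF x] F.Y_conv[OF assms(5) x] by simp
  qed
  have DWY: "DW X P p q \<subseteq> (fk_topology X P) closure_of phi" using F.DW_sub_Y by (rule subsetI)
  have e1: "DS X P p q = DW X P p q" using F.DS_sub_DW DWY YDS by (rule_tac subset_antisym) auto
  have e2: "DW X P p q = (fk_topology X P) closure_of phi" using F.DS_sub_DW DWY YDS by (rule_tac subset_antisym) auto
  show ?thesis using sig e1 e2 by (intro conjI)
qed


end
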